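(* Let $n\ge3$, $\rho\in[0,1)$ and $\alpha\in[0,\tfrac{\pi}{2}]$. Then $$\int_{-1}^1 \frac{\big(\frac{n-2}{n}\rho\cos\alpha-x\big)(1-x^2)^{\frac{n-3}{2}}}{(1+\rho^2-2\rho x \cos\alpha)^{\frac{n}{2}-1}}\, {}_2 F_1\Big(\tfrac{n-2}{4}, \tfrac{n}{4};\tfrac{n-1}{2}; \tfrac{4\rho^2 \sin^2\alpha\, (1-x^2)}{(1+\rho^2-2\rho x \cos\alpha)^2}\Big)\, dx=0.$$
   Context: ${}_2F_1$ is the Gauss hypergeometric function. *)

theory Defs
  imports "HOL-Analysis.Analysis"
begin

definition hyp2F1 :: "real \<Rightarrow> real \<Rightarrow> real \<Rightarrow> real \<Rightarrow> real" where
  "hyp2F1 a b c z =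
     (\<Sum>k. pochhammer a k * pochhammer b k / (pochhammer c k * fact k) * z ^ k)"

end

theory Submission
  imports Defs
begin


lemma sq_lt1: "x \<in> {-1..1} - {-1,1} \<Longrightarrow> 0 < 1 - (x::real)\<^sup>2"
proof -
  assume "x \<in> {-1..1} - {-1,1}"
  then have "\<bar>x\<bar> < 1" by auto
  then show ?thesis using abs_square_less_1[of x] by simp
qed

lemma sq_le1: "x \<in> {-1..1} \<Longrightarrow> 0 \<le> 1 - (x::real)\<^sup>2"
proof -
  assume "x \<in> {-1..1}"
  then have "\<bar>x\<bar> \<le> 1" by auto
  then show ?thesis using abs_square_le_1[of x] by simp
qed

definition Mom :: "real \<Rightarrow> nat \<Rightarrow> real" where
  "Mom b k = integral {-1..1} (\<lambda>x. x^k * (1-x\<^sup>2) powr b)"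

lemma mom_integrable:
  assumes "b \<ge> 0"
  shows "(\<lambda>x::real. x^k * (1-x\<^sup>2) powr b) integrable_on {-1..1}"
proof (cases "b = 0")
  case True
  have i: "(\<lambda>x::real. x^k) integrable_on {-1..1}"
    by (intro integrable_continuous_interval continuous_intros)
  show ?thesis
  proof (rule integrable_spike_finite[of "{-1,1}" _ _ "\<lambda>x. x^k"])
    fix x :: real assume "x \<in> {-1..1} - {-1,1}"
    then have "1 - x\<^sup>2 \<noteq> 0" using sq_lt1 by force
    then show "x^k * (1-x\<^sup>2) powr b = x^k" using True by simp
  qed (use i in auto)
next
  case False
  have "continuous_on {-1..1} (\<lambda>x::real. (1-x\<^sup>2) powr b)"
    apply (rule continuous_on_powr')
      apply (intro continuous_intros)
     apply (intro continuous_intros)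
    using assms False sq_le1 by auto
  then show ?thesis
    by (intro integrable_continuous_interval continuous_on_mult) (auto intro: continuous_intros)
qed

lemma has_integral_mom:
  "b \<ge> 0 \<Longrightarrow> ((\<lambda>x::real. x^k * (1-x\<^sup>2) powr b) has_integral Mom b k) {-1..1}"
  unfolding Mom_def using mom_integrable by (rule integrable_integral)

lemma mom_odd:
  assumes "b \<ge> 0" shows "Mom b (Suc (2*k)) = 0"
proof -
  let ?f = "\<lambda>x::real. x^(Suc (2*k)) * (1-x\<^sup>2) powr b"
  have r: "integral {-1..1} (\<lambda>x. ?f (-x)) = integral {-1..1} ?f"
    using Henstock_Kurzweil_Integration.integral_reflect_real[of 1 "-1" ?f] by (simp only: minus_minus)
  have "integral {-1..1} ?f = integral {-1..1} (\<lambda>x. ?f (-x))"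
    using r by (rule sym)
  also have "\<dots> = integral {-1..1} (\<lambda>x. - ?f x)" by (rule integral_cong) simp
  also have "\<dots> = - integral {-1..1} ?f" by (rule integral_neg)
  finally have "integral {-1..1} ?f = 0" by linarith
  then show ?thesis by (simp only: Mom_def)
qed

lemma mom_rec:
  assumes "b \<ge> 0" shows "Mom b (k+2) + Mom (b+1) k = Mom b k"
proof -
  have "((\<lambda>x::real. x^(k+2) * (1-x\<^sup>2) powr b + x^k * (1-x\<^sup>2) powr (b+1)) has_integral
        (Mom b (k+2) + Mom (b+1) k)) {-1..1}"
    using assms by (intro has_integral_add has_integral_mom) auto
  moreover have "x^(k+2) * (1-x\<^sup>2) powr b + x^k * (1-x\<^sup>2) powr (b+1) = x^k * (1-x\<^sup>2) powr b"
    if "x \<in> {-1..1}" for x :: real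
  proof -
    have h: "(1-x\<^sup>2) powr (b+1) = (1-x\<^sup>2) powr b * (1-x\<^sup>2)"
      using sq_le1[OF that] by (simp add: powr_add)
    show ?thesis unfolding h by (simp add: algebra_simps power2_eq_square power_add)
  qed
  ultimately have "((\<lambda>x::real. x^k * (1-x\<^sup>2) powr b) has_integral
        (Mom b (k+2) + Mom (b+1) k)) {-1..1}"
    using has_integral_spike_finite_eq[of "{}"] by (metis (no_types, lifting) Diff_empty finite.emptyI)
  then show ?thesis using has_integral_mom[OF assms] has_integral_unique by blast
qed

lemma mom_parts:
  assumes "b \<ge> 0" shows "real (k+1) * Mom (b+1) k = 2*(b+1) * Mom b (k+2)"
proof -
  define F where "F = (\<lambda>x::real. x^(k+1) * (1-x\<^sup>2) powr (b+1))"
  define F' where "F' = (\<lambda>x::real. real (k+1) * (x^k*(1-x\<^sup>2) powr (b+1)) - 2*(b+1) * (x^(k+2) * (1-x\<^sup>2) powr b))"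
  have der: "(F has_vector_derivative F' x) (at x)" if "x \<in> {-1<..<1}" for x
  proof -
    have pos: "1 - x\<^sup>2 > 0" using sq_lt1[of x] that by auto
    have d1: "((\<lambda>x. (1-x\<^sup>2) powr (b+1)) has_real_derivative (b+1) * (1-x\<^sup>2) powr (b+1 - of_nat 1) * (-2*x)) (at x)"
      by (rule DERIV_fun_powr) (use pos in \<open>auto intro!: derivative_eq_intros\<close>)
    have d2: "((\<lambda>x. x^(k+1)) has_real_derivative real (k+1) * x^k) (at x)"
      using DERIV_pow[of "k+1" x] by simp
    have "(F has_real_derivative x^(k+1) * ((b+1) * (1-x\<^sup>2) powr (b+1 - of_nat 1) * (-2*x)) + (real (k+1) * x^k) * (1-x\<^sup>2) powr (b+1)) (at x)"
      unfolding F_def by (rule DERIV_mult'[OF d2 d1])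
    moreover have "x^(k+1) * ((b+1) * (1-x\<^sup>2) powr (b+1 - of_nat 1) * (-2*x)) + (real (k+1) * x^k) * (1-x\<^sup>2) powr (b+1) = F' x"
      unfolding F'_def by (simp add: algebra_simps power_add power2_eq_square)
    ultimately show ?thesis by (simp add: has_real_derivative_iff_has_vector_derivative)
  qed
  have cont: "continuous_on {-1..1} F"
  proof -
    have c2: "continuous_on {-1..1} (\<lambda>x::real. (1-x\<^sup>2) powr (b+1))"
      apply (rule continuous_on_powr')
        apply (intro continuous_intros)
       apply (intro continuous_intros)
      using assms sq_le1 by auto
    have c1: "continuous_on {-1..1} (\<lambda>x::real. x^(k+1))" by (intro continuous_intros)
    show ?thesis unfolding F_def using continuous_on_mult[OF c1 c2] .
  qed
  have h1: "(F' has_integral (F 1 - F (-1))) {-1..1}"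
    by (rule fundamental_theorem_of_calculus_interior) (use cont der in auto)
  have h0: "F 1 - F (-1) = 0" unfolding F_def by simp
  have h2: "(F' has_integral (real (k+1) * Mom (b+1) k - 2*(b+1) * Mom b (k+2))) {-1..1}"
    unfolding F'_def using assms
    by (intro has_integral_diff has_integral_mult_right has_integral_mom) auto
  have "real (k+1) * Mom (b+1) k - 2*(b+1) * Mom b (k+2) = 0"
    using has_integral_unique[OF h2 h1] h0 by simp
  then show ?thesis by simp
qed

lemma mom_even_step:
  assumes "b \<ge> 0"
  shows "Mom b (2*k+2) = (2*real k+1)/(2*real k+2*b+3) * Mom b (2*k)"
    and "Mom (b+1) (2*k) = (2*b+2)/(2*real k+2*b+3) * Mom b (2*k)"
proof -
  define M1 where "M1 = Mom b (2*k+2)"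
  define M2 where "M2 = Mom (b+1) (2*k)"
  define M0 where "M0 = Mom b (2*k)"
  have r: "M1 + M2 = M0" using mom_rec[OF assms, of "2*k"] unfolding M0_def M1_def M2_def by simp
  have p: "(2*real k+1) * M2 = 2*(b+1) * M1" using mom_parts[OF assms, of "2*k"] unfolding M0_def M1_def M2_def by (simp add: algebra_simps)
  have d: "2*real k+2*b+3 > 0" using assms by simp
  have "(2*real k+1)*M0 = (2*real k+1)*M1 + (2*real k+1)*M2" using r by (metis distrib_left)
  also have "\<dots> = (2*real k+1)*M1 + 2*(b+1) * M1" using p by simp
  finally have e1: "(2*real k+2*b+3)*M1 = (2*real k+1)*M0" by (simp add: algebra_simps)
  have "(2*b+2)*M0 = (2*b+2)*M1 + (2*b+2)*M2" using r by (metis distrib_left)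
  also have "\<dots> = (2*real k+1) * M2 + (2*b+2)*M2" using p by simp
  finally have e2: "(2*real k+2*b+3)*M2 = (2*b+2)*M0" by (simp add: algebra_simps)
  show "Mom b (2*k+2) = (2*real k+1)/(2*real k+2*b+3) * Mom b (2*k)"
    using e1 d unfolding M0_def M1_def by (simp add: field_simps)
  show "Mom (b+1) (2*k) = (2*b+2)/(2*real k+2*b+3) * Mom b (2*k)"
    using e2 d unfolding M0_def M2_def by (simp add: field_simps)
qed



lemma poch_pos: "x > 0 \<Longrightarrow> pochhammer (x::real) k > 0"
  by (simp add: pochhammer_pos)

lemma mom_even_closed:
  assumes "b \<ge> 0"
  shows "Mom b (2*k) = Mom b 0 * pochhammer (1/2) k / pochhammer (b+3/2) k"
proof (induction k)
  case 0 then show ?case by simp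
next
  case (Suc k)
  define Q where "Q = pochhammer (b+3/2) k"
  define P where "P = pochhammer (1/2::real) k"
  define M where "M = Mom b 0"
  have Q: "Q > 0" unfolding Q_def using assms by (intro poch_pos) simp
  have d1: "2*real k+2*b+3 > 0" using assms by simp
  have d2: "b+3/2+real k > 0" using assms by simp
  have "Mom b (2*Suc k) = Mom b (2*k+2)" by simp
  also have "\<dots> = (2*real k+1)/(2*real k+2*b+3) * Mom b (2*k)" by (rule mom_even_step(1)[OF assms])
  also have "\<dots> = (2*real k+1)/(2*real k+2*b+3) * (M * P / Q)" unfolding Suc M_def P_def Q_def ..
  also have "\<dots> = M * (P * (1/2 + real k)) / (Q * (b+3/2+real k))"
  proof -
    have r: "(2*real k+1)/(2*real k+2*b+3) = (1/2+real k)/(b+3/2+real k)"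
      using d1 d2 by (simp add: field_simps)
    show ?thesis unfolding r by (simp add: mult_ac)
  qed
  also have "\<dots> = Mom b 0 * pochhammer (1/2) (Suc k) / pochhammer (b+3/2) (Suc k)"
    unfolding pochhammer_Suc M_def P_def Q_def ..
  finally show ?case .
qed

lemma mom_shift0:
  assumes "b \<ge> 0"
  shows "Mom (b + real l) 0 = Mom b 0 * pochhammer (b+1) l / pochhammer (b+3/2) l"
proof (induction l)
  case 0 then show ?case by simp
next
  case (Suc l)
  define Q where "Q = pochhammer (b+3/2) l"
  define P where "P = pochhammer (b+1) l"
  define M where "M = Mom b 0"
  have Q: "Q > 0" unfolding Q_def using assms by (intro poch_pos) simp
  have d1: "2*(b+real l)+3 > 0" using assms by simp
  have d2: "b+3/2+real l > 0" using assms by simp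
  have "Mom (b + real (Suc l)) 0 = Mom ((b + real l) + 1) (2*0)" by (simp add: add_ac)
  also have "\<dots> = (2*(b+real l)+2)/(2*real 0+2*(b+real l)+3) * Mom (b+real l) (2*0)"
    by (rule mom_even_step(2)) (use assms in simp)
  also have "\<dots> = (2*(b+real l)+2)/(2*(b+real l)+3) * (M * P / Q)"
    using Suc unfolding M_def P_def Q_def by simp
  also have "\<dots> = M * (P * (b+1+real l)) / (Q * (b+3/2+real l))"
    using Q d1 d2 by (simp add: field_simps)
  also have "\<dots> = Mom b 0 * pochhammer (b+1) (Suc l) / pochhammer (b+3/2) (Suc l)"
    unfolding pochhammer_Suc M_def P_def Q_def ..
  finally show ?case .
qed

lemma mom_closed:
  assumes "b \<ge> 0"
  shows "Mom (b + real l) (2*k) = Mom b 0 * pochhammer (b+1) l * pochhammer (1/2) k / pochhammer (b+3/2) (l+k)"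
proof -
  define Q1 where "Q1 = pochhammer (b+3/2) l"
  define Q2 where "Q2 = pochhammer (b+real l+3/2) k"
  have p1: "Q1 > 0" unfolding Q1_def using assms by (intro poch_pos) simp
  have p2: "Q2 > 0" unfolding Q2_def using assms by (intro poch_pos) simp
  have e: "pochhammer (b+3/2) (l+k) = Q1 * Q2" unfolding Q1_def Q2_def pochhammer_product'
    by (simp add: add_ac)
  have "Mom (b + real l) (2*k) = Mom (b+real l) 0 * pochhammer (1/2) k / Q2"
    unfolding Q2_def by (rule mom_even_closed) (use assms in simp)
  also have "\<dots> = Mom b 0 * pochhammer (b+1) l / Q1 * pochhammer (1/2) k / Q2"
    unfolding mom_shift0[OF assms] Q1_def ..
  also have "\<dots> = Mom b 0 * pochhammer (b+1) l * pochhammer (1/2) k / pochhammer (b+3/2) (l+k)"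
    unfolding e using p1 p2 by (simp add: field_simps)
  finally show ?thesis .
qed

lemma poch_half: "pochhammer (1/2::real) k = fact (2*k) / (2^(2*k) * fact k)"
  using fact_double[of k, where 'a=real] by (simp add: field_simps)

lemma H0':
  "real (2*(l+d) choose (2*l)) * pochhammer (1/2) l * pochhammer (1/2) d = real ((l+d) choose l) * pochhammer (1/2) (l+d)"
proof -
  have b1: "real (2*(l+d) choose (2*l)) = fact (2*l+2*d) / (fact (2*l) * fact (2*d))"
    using binomial_fact[of "2*l" "2*(l+d)", where 'a=real] by (simp add: algebra_simps)
  have b2: "real ((l+d) choose l) = fact (l+d) / (fact l * fact d)"
    using binomial_fact[of l "l+d", where 'a=real] by simp
  show ?thesis
    unfolding poch_half b1 b2
    by (simp add: field_simps power_add algebra_simps)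
qed

lemma H0:
  assumes "l \<le> J"
  shows "real (2*J choose (2*l)) * pochhammer (1/2) l * pochhammer (1/2) (J-l) = real (J choose l) * pochhammer (1/2) J"
  using H0'[of l "J-l"] assms by simp



lemma H1':
  "real ((2*(l+d)+1) choose (2*l)) * pochhammer (1/2) l * pochhammer (1/2) (d+1) = real ((l+d) choose l) * pochhammer (1/2) (l+d+1)"
proof -
  have a0: "(2*(l+d)+1 - 2*l) * ((2*(l+d)+1) choose (2*l)) = (2*(l+d)+1) * ((2*(l+d)+1 - 1) choose (2*l))"
    by (rule binomial_absorb_comp)
  have a: "(2*real d+1) * real ((2*(l+d)+1) choose (2*l)) = (2*real (l+d)+1) * real (2*(l+d) choose (2*l))"
  proof -
    have "2*(l+d)+1 - 2*l = 2*d+1" by simp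
    then have "real ((2*d+1) * ((2*(l+d)+1) choose (2*l))) = real ((2*(l+d)+1) * (2*(l+d) choose (2*l)))"
      using a0 by simp
    then show ?thesis by (simp add: algebra_simps)
  qed
  have h: "real (2*(l+d) choose (2*l)) * pochhammer (1/2) l * pochhammer (1/2) d = real ((l+d) choose l) * pochhammer (1/2) (l+d)"
    by (rule H0')
  have "(2*real d+1) * (real ((2*(l+d)+1) choose (2*l)) * pochhammer (1/2) l * pochhammer (1/2) (d+1))
     = (2*real d+1) * (real ((l+d) choose l) * pochhammer (1/2) (l+d+1))"
  proof -
    have "(2*real d+1) * (real ((2*(l+d)+1) choose (2*l)) * pochhammer (1/2) l * pochhammer (1/2) (d+1))
       = ((2*real d+1) * real ((2*(l+d)+1) choose (2*l))) * pochhammer (1/2) l * pochhammer (1/2) d * (1/2 + real d)"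
      by (simp add: pochhammer_Suc mult_ac)
    also have "\<dots> = (2*real (l+d)+1) * (real (2*(l+d) choose (2*l)) * pochhammer (1/2) l * pochhammer (1/2) d) * (1/2 + real d)"
      unfolding a by (simp add: mult_ac)
    also have "\<dots> = (2*real (l+d)+1) * (real ((l+d) choose l) * pochhammer (1/2) (l+d)) * (1/2 + real d)"
      unfolding h ..
    also have "\<dots> = (2*real d+1) * (real ((l+d) choose l) * pochhammer (1/2) (l+d+1))"
      by (simp add: pochhammer_Suc algebra_simps)
    finally show ?thesis .
  qed
  moreover have "2*real d+1 \<noteq> 0" by (smt (verit) of_nat_0_le_iff)
  ultimately show ?thesis by simp
qed

lemma H1:
  assumes "l \<le> J"
  shows "real ((2*J+1) choose (2*l)) * pochhammer (1/2) l * pochhammer (1/2) (J+1-l) = real (J choose l) * pochhammer (1/2) (J+1)"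
  using H1'[of l "J-l"] assms by (simp add: Suc_diff_le)

definition mu :: "real \<Rightarrow> nat \<Rightarrow> real" where
  "mu nu l = pochhammer (1/2) l / pochhammer (nu+1) l"

lemma T0:
  assumes "nu \<ge> 0" "l \<le> J"
  shows "real (2*J choose (2*l)) * mu nu l * Mom (nu + real l) (2*(J-l)) = real (J choose l) * Mom nu (2*J)"
proof -
  have p: "pochhammer (nu+1) l > 0" using assms by (intro poch_pos) simp
  have m1: "Mom (nu + real l) (2*(J-l)) = Mom nu 0 * pochhammer (nu+1) l * pochhammer (1/2) (J-l) / pochhammer (nu+3/2) J"
    using mom_closed[OF assms(1), of l "J-l"] assms by simp
  have m2: "Mom nu (2*J) = Mom nu 0 * pochhammer (1/2) J / pochhammer (nu+3/2) J"
    using mom_closed[OF assms(1), of 0 J] by simp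
  have "real (2*J choose (2*l)) * mu nu l * Mom (nu + real l) (2*(J-l))
      = (real (2*J choose (2*l)) * pochhammer (1/2) l * pochhammer (1/2) (J-l)) * Mom nu 0 / pochhammer (nu+3/2) J"
    unfolding m1 mu_def using p by (simp add: field_simps)
  also have "\<dots> = real (J choose l) * Mom nu (2*J)"
    unfolding H0[OF assms(2)] m2 by simp
  finally show ?thesis .
qed

lemma T1:
  assumes "nu \<ge> 0" "l \<le> J"
  shows "real ((2*J+1) choose (2*l)) * mu nu l * Mom (nu + real l) (2*(J+1-l)) = real (J choose l) * Mom nu (2*(J+1))"
proof -
  have p: "pochhammer (nu+1) l > 0" using assms by (intro poch_pos) simp
  have m1: "Mom (nu + real l) (2*(J+1-l)) = Mom nu 0 * pochhammer (nu+1) l * pochhammer (1/2) (J+1-l) / pochhammer (nu+3/2) (J+1)"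
    using mom_closed[OF assms(1), of l "J+1-l"] assms by simp
  have m2: "Mom nu (2*(J+1)) = Mom nu 0 * pochhammer (1/2) (J+1) / pochhammer (nu+3/2) (J+1)"
    using mom_closed[OF assms(1), of 0 "J+1"] by simp
  have "real ((2*J+1) choose (2*l)) * mu nu l * Mom (nu + real l) (2*(J+1-l))
      = (real ((2*J+1) choose (2*l)) * pochhammer (1/2) l * pochhammer (1/2) (J+1-l)) * Mom nu 0 / pochhammer (nu+3/2) (J+1)"
    unfolding m1 mu_def using p by (simp add: field_simps)
  also have "\<dots> = real (J choose l) * Mom nu (2*(J+1))"
    unfolding H1[OF assms(2)] m2 by simp
  finally show ?thesis .
qed



definition Pj :: "real \<Rightarrow> real \<Rightarrow> real \<Rightarrow> nat \<Rightarrow> real \<Rightarrow> real" where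
  "Pj nu c s j x = (\<Sum>l\<le>j div 2. real (j choose (2*l)) * (c*x)^(j-2*l) * (s\<^sup>2*(1-x\<^sup>2))^l * mu nu l)"

lemma pw: "0 \<le> (t::real) \<Longrightarrow> t^l * t powr nu = t powr (nu + real l)"
proof (cases "t = 0")
  case True then show ?thesis by simp
next
  case False
  assume "0 \<le> t"
  with False have "t > 0" by simp
  then show ?thesis by (simp add: powr_add powr_realpow)
qed

lemma R2_gen:
  assumes "nu \<ge> 0"
  shows "((\<lambda>x. x^e * Pj nu c s j x * (1-x\<^sup>2) powr nu) has_integral
     (\<Sum>l\<le>j div 2. (real (j choose (2*l)) * c^(j-2*l) * (s\<^sup>2)^l * mu nu l) * Mom (nu+real l) (j-2*l+e))) {-1..1}"
proof -
  have H: "((\<lambda>x. \<Sum>l\<le>j div 2. (real (j choose (2*l)) * c^(j-2*l) * (s\<^sup>2)^l * mu nu l) * (x^(j-2*l+e) * (1-x\<^sup>2) powr (nu+real l)))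
     has_integral (\<Sum>l\<le>j div 2. (real (j choose (2*l)) * c^(j-2*l) * (s\<^sup>2)^l * mu nu l) * Mom (nu+real l) (j-2*l+e))) {-1..1}"
    by (intro has_integral_sum has_integral_mult_right has_integral_mom) (use assms in auto)
  show ?thesis
  proof (rule has_integral_spike_finite[OF finite.emptyI _ H])
    fix x :: real assume "x \<in> {-1..1} - {}"
    then have t: "0 \<le> 1 - x\<^sup>2" using sq_le1 by auto
    show "x^e * Pj nu c s j x * (1-x\<^sup>2) powr nu = (\<Sum>l\<le>j div 2. (real (j choose (2*l)) * c^(j-2*l) * (s\<^sup>2)^l * mu nu l) * (x^(j-2*l+e) * (1-x\<^sup>2) powr (nu+real l)))"
      unfolding Pj_def sum_distrib_left sum_distrib_right
    proof (rule sum.cong[OF refl])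
      fix l assume "l \<in> {..j div 2}"
      have "x ^ e * (real (j choose (2*l)) * (c*x)^(j-2*l) * (s\<^sup>2*(1-x\<^sup>2))^l * mu nu l) * (1-x\<^sup>2) powr nu
         = (real (j choose (2*l)) * c^(j-2*l) * (s\<^sup>2)^l * mu nu l) * (x^(j-2*l+e) * ((1-x\<^sup>2)^l * (1-x\<^sup>2) powr nu))"
        by (simp add: power_mult_distrib power_add mult_ac)
      also have "\<dots> = (real (j choose (2*l)) * c^(j-2*l) * (s\<^sup>2)^l * mu nu l) * (x^(j-2*l+e) * (1-x\<^sup>2) powr (nu+real l))"
        unfolding pw[OF t] ..
      finally show "x ^ e * (real (j choose (2*l)) * (c*x)^(j-2*l) * (s\<^sup>2*(1-x\<^sup>2))^l * mu nu l) * (1-x\<^sup>2) powr nu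
         = (real (j choose (2*l)) * c^(j-2*l) * (s\<^sup>2)^l * mu nu l) * (x^(j-2*l+e) * (1-x\<^sup>2) powr (nu+real l))" .
    qed
  qed
qed

lemma V0:
  assumes "nu \<ge> 0" "c\<^sup>2 + s\<^sup>2 = 1"
  shows "(\<Sum>l\<le>j div 2. (real (j choose (2*l)) * c^(j-2*l) * (s\<^sup>2)^l * mu nu l) * Mom (nu+real l) (j-2*l+0)) = Mom nu j"
proof (cases "even j")
  case True
  then obtain J where j: "j = 2*J" by (rule evenE)
  have "(\<Sum>l\<le>j div 2. (real (j choose (2*l)) * c^(j-2*l) * (s\<^sup>2)^l * mu nu l) * Mom (nu+real l) (j-2*l+0))
      = (\<Sum>l\<le>J. Mom nu (2*J) * (real (J choose l) * (s\<^sup>2)^l * (c\<^sup>2)^(J-l)))"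
  proof (rule sum.cong)
    show "{..j div 2} = {..J}" using j by simp
  next
    fix l assume l: "l \<in> {..J}"
    then have l': "l \<le> J" by simp
    have e1: "j - 2*l + 0 = 2*(J-l)" using j l' by simp
    have e2: "c^(j-2*l) = (c\<^sup>2)^(J-l)" using j l' by (simp add: power_mult[symmetric] diff_mult_distrib2)
    have "(real (j choose (2*l)) * c^(j-2*l) * (s\<^sup>2)^l * mu nu l) * Mom (nu+real l) (j-2*l+0)
        = (c\<^sup>2)^(J-l) * (s\<^sup>2)^l * (real (2*J choose (2*l)) * mu nu l * Mom (nu+real l) (2*(J-l)))"
      unfolding e1 e2 unfolding j by (simp add: mult_ac)
    also have "\<dots> = Mom nu (2*J) * (real (J choose l) * (s\<^sup>2)^l * (c\<^sup>2)^(J-l))"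
      unfolding T0[OF assms(1) l'] by (simp add: mult_ac)
    finally show "(real (j choose (2*l)) * c^(j-2*l) * (s\<^sup>2)^l * mu nu l) * Mom (nu+real l) (j-2*l+0)
        = Mom nu (2*J) * (real (J choose l) * (s\<^sup>2)^l * (c\<^sup>2)^(J-l))" .
  qed
  also have "\<dots> = Mom nu (2*J) * (s\<^sup>2 + c\<^sup>2)^J"
    unfolding binomial_ring[of "s\<^sup>2" "c\<^sup>2" J] sum_distrib_left by (simp add: mult_ac)
  also have "\<dots> = Mom nu j" using assms(2) j by (simp add: add.commute)
  finally show ?thesis .
next
  case False
  then obtain J where j: "j = 2*J+1" by (rule oddE)
  have "(\<Sum>l\<le>j div 2. (real (j choose (2*l)) * c^(j-2*l) * (s\<^sup>2)^l * mu nu l) * Mom (nu+real l) (j-2*l+0)) = 0"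
  proof (rule sum.neutral, rule ballI)
    fix l assume "l \<in> {..j div 2}"
    then have l': "l \<le> J" using j by simp
    have "j - 2*l + 0 = Suc (2*(J-l))" using j l' by simp
    then have "Mom (nu+real l) (j-2*l+0) = 0" using mom_odd[of "nu + real l" "J-l"] assms(1) by simp
    then show "(real (j choose (2*l)) * c^(j-2*l) * (s\<^sup>2)^l * mu nu l) * Mom (nu+real l) (j-2*l+0) = 0" by simp
  qed
  moreover have "Mom nu j = 0" using mom_odd[OF assms(1), of J] j by simp
  ultimately show ?thesis by simp
qed

lemma V1:
  assumes "nu \<ge> 0" "c\<^sup>2 + s\<^sup>2 = 1"
  shows "(\<Sum>l\<le>j div 2. (real (j choose (2*l)) * c^(j-2*l) * (s\<^sup>2)^l * mu nu l) * Mom (nu+real l) (j-2*l+1)) = c * Mom nu (j+1)"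
proof (cases "even j")
  case False
  then obtain J where j: "j = 2*J+1" by (rule oddE)
  have "(\<Sum>l\<le>j div 2. (real (j choose (2*l)) * c^(j-2*l) * (s\<^sup>2)^l * mu nu l) * Mom (nu+real l) (j-2*l+1))
      = (\<Sum>l\<le>J. c * Mom nu (2*(J+1)) * (real (J choose l) * (s\<^sup>2)^l * (c\<^sup>2)^(J-l)))"
  proof (rule sum.cong)
    show "{..j div 2} = {..J}" using j by simp
  next
    fix l assume l: "l \<in> {..J}"
    then have l': "l \<le> J" by simp
    have e1: "j - 2*l + 1 = 2*(J+1-l)" using j l' by simp
    have e2: "c^(j-2*l) = c * (c\<^sup>2)^(J-l)"
    proof -
      have "j - 2*l = Suc (2*(J-l))" using j l' by simp
      then show ?thesis by (simp add: power_mult[symmetric])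
    qed
    have "(real (j choose (2*l)) * c^(j-2*l) * (s\<^sup>2)^l * mu nu l) * Mom (nu+real l) (j-2*l+1)
        = c * (c\<^sup>2)^(J-l) * (s\<^sup>2)^l * (real ((2*J+1) choose (2*l)) * mu nu l * Mom (nu+real l) (2*(J+1-l)))"
      unfolding e1 e2 unfolding j by (simp add: mult_ac)
    also have "\<dots> = c * Mom nu (2*(J+1)) * (real (J choose l) * (s\<^sup>2)^l * (c\<^sup>2)^(J-l))"
      unfolding T1[OF assms(1) l'] by (simp add: mult_ac)
    finally show "(real (j choose (2*l)) * c^(j-2*l) * (s\<^sup>2)^l * mu nu l) * Mom (nu+real l) (j-2*l+1)
        = c * Mom nu (2*(J+1)) * (real (J choose l) * (s\<^sup>2)^l * (c\<^sup>2)^(J-l))" .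
  qed
  also have "\<dots> = c * Mom nu (2*(J+1)) * (s\<^sup>2 + c\<^sup>2)^J"
    unfolding binomial_ring[of "s\<^sup>2" "c\<^sup>2" J] sum_distrib_left by (simp add: mult_ac)
  also have "\<dots> = c * Mom nu (j+1)" using assms(2) j by (simp add: add.commute)
  finally show ?thesis .
next
  case True
  then obtain J where j: "j = 2*J" by (rule evenE)
  have "(\<Sum>l\<le>j div 2. (real (j choose (2*l)) * c^(j-2*l) * (s\<^sup>2)^l * mu nu l) * Mom (nu+real l) (j-2*l+1)) = 0"
  proof (rule sum.neutral, rule ballI)
    fix l assume "l \<in> {..j div 2}"
    then have l': "l \<le> J" using j by simp
    have "j - 2*l + 1 = Suc (2*(J-l))" using j l' by simp
    then have "Mom (nu+real l) (j-2*l+1) = 0" using mom_odd[of "nu + real l" "J-l"] assms(1) by simp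
    then show "(real (j choose (2*l)) * c^(j-2*l) * (s\<^sup>2)^l * mu nu l) * Mom (nu+real l) (j-2*l+1) = 0" by simp
  qed
  moreover have "Mom nu (j+1) = 0" using mom_odd[OF assms(1), of J] j by simp
  ultimately show ?thesis by simp
qed

lemma R2:
  assumes "nu \<ge> 0" "c\<^sup>2 + s\<^sup>2 = 1"
  shows "((\<lambda>x. Pj nu c s j x * (1-x\<^sup>2) powr nu) has_integral Mom nu j) {-1..1}"
    and "((\<lambda>x. x * Pj nu c s j x * (1-x\<^sup>2) powr nu) has_integral c * Mom nu (j+1)) {-1..1}"
proof -
  show "((\<lambda>x. Pj nu c s j x * (1-x\<^sup>2) powr nu) has_integral Mom nu j) {-1..1}"
    using R2_gen[OF assms(1), of 0 c s j] unfolding V0[OF assms] by simp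
  show "((\<lambda>x. x * Pj nu c s j x * (1-x\<^sup>2) powr nu) has_integral c * Mom nu (j+1)) {-1..1}"
    using R2_gen[OF assms(1), of 1 c s j] unfolding V1[OF assms] by simp
qed



lemma BS:
  fixes t p :: real
  assumes "\<bar>t\<bar> < 1"
  shows "(\<lambda>i. pochhammer p i / fact i * t^i) sums ((1 - t) powr (-p))"
proof -
  have "\<bar>-t\<bar> < 1" using assms by simp
  from gen_binomial_real[OF this, of "-p"]
  have "(\<lambda>n. ((-p) gchoose n) * (-t)^n) sums (1 + -t) powr (-p)" .
  moreover have "((-p) gchoose n) * (-t)^n = pochhammer p n / fact n * t^n" for n
  proof -
    have "((-p) gchoose n) * (-t)^n = ((-1)^n * (-1)^n) * (pochhammer p n / fact n * t^n)"
      unfolding gbinomial_pochhammer by (simp add: power_minus[of t] mult_ac)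
    also have "(-1::real)^n * (-1)^n = 1" by (simp add: power_mult_distrib[symmetric])
    finally show ?thesis by simp
  qed
  ultimately show ?thesis by simp
qed

lemma poch_mono:
  fixes a b :: real
  assumes "0 < a" "a \<le> b"
  shows "pochhammer a l \<le> pochhammer b l"
proof (induction l)
  case 0 then show ?case by simp
next
  case (Suc l)
  have "pochhammer a l * (a + real l) \<le> pochhammer b l * (b + real l)"
    by (rule mult_mono) (use Suc assms in \<open>auto intro: pochhammer_nonneg less_imp_le\<close>)
  then show ?case by (simp add: pochhammer_Suc)
qed

lemma mu_bounds:
  assumes "nu \<ge> 0"
  shows "0 \<le> mu nu l" "mu nu l \<le> 1"
proof -
  have p: "pochhammer (nu+1) l > 0" using assms by (intro poch_pos) simp
  have q: "pochhammer (1/2::real) l \<ge> 0" by (intro pochhammer_nonneg) simp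
  show "0 \<le> mu nu l" unfolding mu_def using p q by simp
  have "pochhammer (1/2::real) l \<le> pochhammer (nu+1) l" by (rule poch_mono) (use assms in auto)
  then show "mu nu l \<le> 1" unfolding mu_def using p by simp
qed

lemma even_sub_sum:
  fixes f :: "nat \<Rightarrow> real"
  assumes "\<And>k. f k \<ge> 0"
  shows "(\<Sum>l\<le>j div 2. f (2*l)) \<le> (\<Sum>k\<le>j. f k)"
proof -
  have "(\<Sum>l\<le>j div 2. f (2*l)) = sum f ((\<lambda>l. 2*l) ` {..j div 2})"
    by (subst sum.reindex) (auto simp: inj_on_def)
  also have "\<dots> \<le> sum f {..j}"
    by (rule sum_mono2) (use assms in auto)
  finally show ?thesis .
qed

lemma Pbound:
  assumes "0 \<le> V" "\<bar>X\<bar> + sqrt V \<le> 1" "nu \<ge> 0"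
  shows "(\<Sum>l\<le>j div 2. real (j choose (2*l)) * \<bar>X\<bar>^(j-2*l) * V^l * mu nu l) \<le> 1"
proof -
  define f where "f k = real (j choose k) * sqrt V ^ k * \<bar>X\<bar>^(j-k)" for k
  have "(\<Sum>l\<le>j div 2. real (j choose (2*l)) * \<bar>X\<bar>^(j-2*l) * V^l * mu nu l) \<le> (\<Sum>l\<le>j div 2. f (2*l))"
  proof (rule sum_mono)
    fix l assume "l \<in> {..j div 2}"
    have "V^l = sqrt V ^ (2*l)" using assms(1) by (simp add: power_mult)
    then have "real (j choose (2*l)) * \<bar>X\<bar>^(j-2*l) * V^l * mu nu l = f (2*l) * mu nu l"
      unfolding f_def by (simp add: mult_ac)
    also have "\<dots> \<le> f (2*l)"
      using mu_bounds[OF assms(3), of l] unfolding f_def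
      by (intro mult_right_le_one_le) (auto simp: assms(1))
    finally show "real (j choose (2*l)) * \<bar>X\<bar>^(j-2*l) * V^l * mu nu l \<le> f (2*l)" .
  qed
  also have "\<dots> \<le> (\<Sum>k\<le>j. f k)" by (rule even_sub_sum) (simp add: f_def assms(1))
  also have "\<dots> = (sqrt V + \<bar>X\<bar>)^j" unfolding f_def binomial_ring ..
  also have "\<dots> \<le> 1" using assms by (intro power_le_one) auto
  finally show ?thesis .
qed

lemma CS:
  assumes "c\<^sup>2 + s\<^sup>2 = 1" "x \<in> {-1..1}"
  shows "\<bar>c*x\<bar> + sqrt (s\<^sup>2*(1-x\<^sup>2)) \<le> 1"
proof -
  define r where "r = sqrt (1-x\<^sup>2)"
  have h: "0 \<le> 1 - x\<^sup>2" by (rule sq_le1[OF assms(2)])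
  have r0: "r \<ge> 0" unfolding r_def using h by simp
  have r2: "r\<^sup>2 = 1 - x\<^sup>2" by (simp only: r_def real_sqrt_pow2[OF h])
  have e: "sqrt (s\<^sup>2*(1-x\<^sup>2)) = \<bar>s\<bar> * r" unfolding r_def by (simp add: real_sqrt_mult)
  have "(\<bar>c\<bar>*\<bar>x\<bar> + \<bar>s\<bar>*r)\<^sup>2 \<le> 1\<^sup>2"
  proof -
    have "0 \<le> (\<bar>c\<bar>*r - \<bar>s\<bar>*\<bar>x\<bar>)\<^sup>2" by simp
    then have "2*(\<bar>c\<bar>*\<bar>x\<bar>)*(\<bar>s\<bar>*r) \<le> c\<^sup>2*r\<^sup>2 + s\<^sup>2*x\<^sup>2"
      by (simp add: power2_eq_square algebra_simps)
    moreover have "(\<bar>c\<bar>*\<bar>x\<bar> + \<bar>s\<bar>*r)\<^sup>2 = c\<^sup>2*x\<^sup>2 + s\<^sup>2*r\<^sup>2 + 2*(\<bar>c\<bar>*\<bar>x\<bar>)*(\<bar>s\<bar>*r)"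
      by (simp add: power2_eq_square algebra_simps)
    moreover have "c\<^sup>2*x\<^sup>2 + s\<^sup>2*r\<^sup>2 + (c\<^sup>2*r\<^sup>2 + s\<^sup>2*x\<^sup>2) = (c\<^sup>2+s\<^sup>2)*(x\<^sup>2+r\<^sup>2)"
      by (simp add: algebra_simps)
    moreover have "(c\<^sup>2+s\<^sup>2)*(x\<^sup>2+r\<^sup>2) = 1" using assms(1) r2 by simp
    ultimately show ?thesis by simp
  qed
  then have "\<bar>c\<bar>*\<bar>x\<bar> + \<bar>s\<bar>*r \<le> 1" by (rule power2_le_imp_le) simp
  then show ?thesis unfolding e by (simp add: abs_mult)
qed



definition aco :: "real \<Rightarrow> real \<Rightarrow> nat \<Rightarrow> real" where
  "aco m \<rho> j = pochhammer m j / fact j * (2*\<rho>/(1+\<rho>\<^sup>2))^j * (1+\<rho>\<^sup>2) powr (-m)"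

lemma coef_lemma:
  assumes "nu = m - 1/2" "pa = m/2" "pb = (m+1)/2" "pc = m + 1/2" "m \<ge> 1/2"
  shows "pochhammer m (2*l) / fact (2*l) * mu nu l = pochhammer pa l * pochhammer pb l / (pochhammer pc l * fact l)"
proof -
  have d0: "pochhammer m (2*l) = 2^(2*l) * pochhammer (m/2) l * pochhammer (m/2+1/2) l"
    using pochhammer_double[of "m/2::real" l] by simp
  have q1: "pochhammer pa l = pochhammer (m/2) l" by (simp only: assms(2))
  have q2: "pochhammer pb l = pochhammer (m/2+1/2) l" by (simp only: assms(3) add_divide_distrib)
  have d: "pochhammer m (2*l) = 2^(2*l) * pochhammer pa l * pochhammer pb l"
    by (simp only: q1 q2 d0)
  have f: "fact (2*l) = (2^(2*l) * pochhammer (1/2) l * fact l :: real)" by (rule fact_double)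
  have p1: "pochhammer (1/2::real) l > 0" by (intro poch_pos) simp
  have p2: "pochhammer pc l > 0" using assms by (intro poch_pos) simp
  have e: "nu + 1 = pc" using assms by simp
  have mu: "mu nu l = pochhammer (1/2) l / pochhammer pc l" unfolding mu_def e ..
  show ?thesis unfolding d f mu using p1 p2 by (simp add: field_simps)
qed

lemma alg_T:
  fixes m \<rho> X V nu :: real
  assumes "0 \<le> \<rho>"
  shows "aco m \<rho> (i+2*l) * (real ((i+2*l) choose (2*l)) * X^(i+2*l-2*l) * V^l * mu nu l)
     = (pochhammer m (2*l) / fact (2*l) * (2*\<rho>/(1+\<rho>\<^sup>2))^(2*l) * V^l * mu nu l * (1+\<rho>\<^sup>2) powr (-m))
       * (pochhammer (m+real (2*l)) i / fact i * ((2*\<rho>/(1+\<rho>\<^sup>2))*X)^i)"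
proof -
  have b: "real ((i+2*l) choose (2*l)) = fact (i+2*l) / (fact (2*l) * fact i)"
    using binomial_fact[of "2*l" "i+2*l", where 'a=real] by simp
  have p: "pochhammer m (i+2*l) = pochhammer m (2*l) * pochhammer (m + real (2*l)) i"
    using pochhammer_product'[of m "2*l" i] by (simp add: add.commute)
  have f: "(fact (i+2*l)::real) \<noteq> 0" by simp
  show ?thesis unfolding aco_def b p using f
    by (simp add: field_simps power_add power_mult_distrib)
qed

lemma alg_K:
  fixes a r A y \<rho> m :: real
  assumes "a > 0" "r > 0" "A = a * r" "y = 2*\<rho>/a"
  shows "y^(2*l) * a powr (-m) * r powr (-(m + real (2*l))) = (4*\<rho>\<^sup>2/A\<^sup>2)^l * A powr (-m)"
proof -
  have 1: "y^(2*l) = (2*\<rho>)^(2*l)/a^(2*l)" by (simp add: assms(4) power_divide)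
  have 2: "r powr (-(m + real (2*l))) = r powr (-m) / r^(2*l)"
  proof -
    have "r powr (-(m + real (2*l))) = r powr (-m) * r powr (- real (2*l))"
      by (simp add: powr_add[symmetric])
    also have "r powr (- real (2*l)) = 1 / r^(2*l)"
      by (simp only: powr_minus powr_realpow[OF assms(2)] inverse_eq_divide)
    finally show ?thesis by simp
  qed
  have 3: "A powr (-m) = a powr (-m) * r powr (-m)" using assms by (simp add: powr_mult)
  have 4: "(4*\<rho>\<^sup>2/A\<^sup>2)^l = (2*\<rho>)^(2*l) / (a^(2*l) * r^(2*l))"
  proof -
    have "4*\<rho>\<^sup>2/A\<^sup>2 = (2*\<rho>)^2 / (a^2*r^2)" using assms(3) by (simp add: power_mult_distrib)
    then have "(4*\<rho>\<^sup>2/A\<^sup>2)^l = ((2*\<rho>)^2)^l / ((a^2)^l*(r^2)^l)" by (simp only: power_divide power_mult_distrib)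
    then show ?thesis by (simp only: power_mult[symmetric])
  qed
  have p: "a^(2*l) > 0" "r^(2*l) > 0" using assms by auto
  show ?thesis unfolding 1 2 3 4 using p by (simp add: field_simps)
qed



lemma R1:
  fixes m nu \<rho> c s x pa pb pc :: real
  assumes m: "m \<ge> 1/2" "nu = m - 1/2" and r: "0 \<le> \<rho>" "\<rho> < 1" and cs: "c\<^sup>2+s\<^sup>2=1" and x: "x \<in> {-1..1}"
    and pp: "pa = m/2" "pb = (m+1)/2" "pc = m + 1/2"
  shows "(\<lambda>j. aco m \<rho> j * Pj nu c s j x) sums
     (hyp2F1 pa pb pc (4 * \<rho>\<^sup>2 * s\<^sup>2 * (1-x\<^sup>2)/(1+\<rho>\<^sup>2-2*\<rho>*x*c)\<^sup>2) / (1+\<rho>\<^sup>2-2*\<rho>*x*c) powr m)"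
proof -
  define a where "a = 1+\<rho>\<^sup>2"
  define y where "y = 2*\<rho>/a"
  define X where "X = c*x"
  define V where "V = s\<^sup>2*(1-x\<^sup>2)"
  define A where "A = 1+\<rho>\<^sup>2-2*\<rho>*x*c"
  define rr where "rr = 1 - y*X"
  have nu0: "nu \<ge> 0" using m by simp
  have a0: "a > 0" unfolding a_def by (simp add: add_pos_nonneg)
  have y0: "0 \<le> y" unfolding y_def using r a0 by simp
  have y1: "y < 1"
  proof -
    have "0 < (1-\<rho>)\<^sup>2" using r by simp
    then have "2*\<rho> < 1+\<rho>\<^sup>2" by (simp add: power2_eq_square algebra_simps)
    then show ?thesis unfolding y_def a_def by (simp add: add_pos_nonneg)
  qed
  have V0: "0 \<le> V" unfolding V_def using sq_le1[OF x] by simp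
  have XV: "\<bar>X\<bar> + sqrt V \<le> 1" unfolding X_def V_def by (rule CS[OF cs x])
  have X1: "\<bar>X\<bar> \<le> 1" using XV real_sqrt_ge_zero[OF V0] by linarith
  have yX: "\<bar>y*X\<bar> < 1"
  proof -
    have "\<bar>y*X\<bar> = y*\<bar>X\<bar>" using y0 by (simp add: abs_mult)
    also have "\<dots> \<le> y" using X1 y0 by (simp add: mult_left_le)
    finally show ?thesis using y1 by simp
  qed
  have rr0: "rr > 0" using yX unfolding rr_def by (simp add: abs_less_iff)
  have AA: "A = a * rr" using a0 unfolding A_def a_def rr_def y_def X_def by (simp add: field_simps)
  have A0: "A > 0" using AA a0 rr0 by simp
  have aco_eq: "aco m \<rho> j = pochhammer m j / fact j * y^j * a powr (-m)" for j
    unfolding aco_def y_def a_def ..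
  have aco_nn: "aco m \<rho> j \<ge> 0" for j
    unfolding aco_eq using y0 m by (intro mult_nonneg_nonneg divide_nonneg_nonneg pochhammer_nonneg) auto
  have aco_sums: "(\<lambda>j. aco m \<rho> j) sums ((1-y) powr (-m) * a powr (-m))"
  proof -
    have "\<bar>y\<bar> < 1" using y0 y1 by simp
    from sums_mult2[OF BS[OF this, of m], of "a powr (-m)"] show ?thesis unfolding aco_eq .
  qed
  have aco_sumon: "(\<lambda>j. aco m \<rho> j) summable_on UNIV"
    using sums_nonneg_imp_has_sum[OF aco_sums aco_nn] by (rule has_sum_imp_summable)
  define F where "F = (\<lambda>(j,l). aco m \<rho> j * (real (j choose (2*l)) * X^(j-2*l) * V^l * mu nu l))"
  define B where "B = (\<lambda>j::nat. {..j div 2})"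
  have normF: "norm (F (j,l)) = aco m \<rho> j * (real (j choose (2*l)) * \<bar>X\<bar>^(j-2*l) * V^l * mu nu l)" for j l
    unfolding F_def using aco_nn[of j] V0 mu_bounds(1)[OF nu0, of l]
    by (simp add: abs_mult power_abs)
  have Fabs: "(\<lambda>p. norm (F p)) summable_on Sigma UNIV B"
  proof (rule summable_on_SigmaI[where g = "\<lambda>j. \<Sum>l\<in>B j. norm (F (j,l))"])
    fix j :: nat assume "j \<in> UNIV"
    show "((\<lambda>l. norm (F (j,l))) has_sum (\<Sum>l\<in>B j. norm (F (j,l)))) (B j)"
      by (rule has_sum_finite) (simp add: B_def)
  next
    show "(\<lambda>j. \<Sum>l\<in>B j. norm (F (j,l))) summable_on UNIV"
    proof (rule summable_on_comparison_test[OF aco_sumon])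
      fix j :: nat assume "j \<in> UNIV"
      have "(\<Sum>l\<in>B j. norm (F (j,l))) = aco m \<rho> j * (\<Sum>l\<le>j div 2. real (j choose (2*l)) * \<bar>X\<bar>^(j-2*l) * V^l * mu nu l)"
        unfolding normF B_def sum_distrib_left ..
      also have "\<dots> \<le> aco m \<rho> j * 1"
        by (rule mult_left_mono[OF Pbound[OF V0 XV nu0] aco_nn])
      finally show "(\<Sum>l\<in>B j. norm (F (j,l))) \<le> aco m \<rho> j" by simp
      show "0 \<le> (\<Sum>l\<in>B j. norm (F (j,l)))" by (intro sum_nonneg) simp
    qed
  next
    fix j l assume "j \<in> UNIV" "l \<in> B j"
    show "0 \<le> norm (F (j,l))" by simp
  qed
  have Fsum: "F summable_on Sigma UNIV B" using Fabs by (rule abs_summable_summable)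
  define S where "S = infsum F (Sigma UNIV B)"
  have FS: "(F has_sum S) (Sigma UNIV B)" using Fsum unfolding S_def by simp
  have PA: "((\<lambda>j. aco m \<rho> j * Pj nu c s j x) has_sum S) UNIV"
  proof (rule has_sum_Sigma'[OF FS])
    fix j :: nat assume "j \<in> UNIV"
    have "aco m \<rho> j * Pj nu c s j x = (\<Sum>l\<in>B j. F (j,l))"
      unfolding Pj_def F_def B_def X_def V_def sum_distrib_left by (simp add: mult_ac)
    then show "((\<lambda>l. F (j,l)) has_sum (aco m \<rho> j * Pj nu c s j x)) (B j)"
      by (simp add: B_def)
  qed
  define T where "T = (\<lambda>l i. F (i + 2*l, l))"
  have bij: "bij_betw (\<lambda>(l,i). (i+2*l, l)) (UNIV \<times> UNIV) (Sigma UNIV B)"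
    by (rule bij_betw_byWitness[where f' = "\<lambda>(j,l). (l, j - 2*l)"]) (auto simp: B_def)
  have fe: "(\<lambda>p. F ((\<lambda>(l,i). (i+2*l, l)) p)) = (\<lambda>(l,i). T l i)"
    by (auto simp: T_def)
  have TS: "((\<lambda>(l,i). T l i) has_sum S) (UNIV \<times> UNIV)"
    using has_sum_reindex_bij_betw[OF bij, of F S] FS unfolding fe by simp
  have Tsum: "(\<lambda>(l,i). T l i) summable_on (UNIV \<times> UNIV)" using TS by (rule has_sum_imp_summable)
  define K where "K l = pochhammer m (2*l) / fact (2*l) * y^(2*l) * V^l * mu nu l * a powr (-m)" for l
  define b where "b l = pochhammer pa l * pochhammer pb l / (pochhammer pc l * fact l) * (4*\<rho>\<^sup>2*V/A\<^sup>2)^l * A powr (-m)" for l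
  have Tform: "T l i = K l * (pochhammer (m + real (2*l)) i / fact i * (y*X)^i)" for l i
    unfolding T_def F_def K_def y_def a_def using alg_T[OF r(1), of m i l X V nu] by simp
  have Tsums: "(\<lambda>i. T l i) sums b l" for l
  proof -
    have "(\<lambda>i. pochhammer (m + real (2*l)) i / fact i * (y*X)^i) sums ((1 - y*X) powr (-(m + real (2*l))))"
      by (rule BS[OF yX])
    then have "(\<lambda>i. K l * (pochhammer (m + real (2*l)) i / fact i * (y*X)^i)) sums (K l * (1 - y*X) powr (-(m + real (2*l))))"
      by (rule sums_mult)
    moreover have "K l * (1 - y*X) powr (-(m + real (2*l))) = b l"
    proof -
      have "K l * rr powr (-(m + real(2*l))) = (pochhammer m (2*l) / fact (2*l) * mu nu l) * V^l * (y^(2*l) * a powr (-m) * rr powr (-(m + real (2*l))))"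
        unfolding K_def by (simp add: mult_ac)
      also have "\<dots> = (pochhammer pa l * pochhammer pb l / (pochhammer pc l * fact l)) * V^l * ((4*\<rho>\<^sup>2/A\<^sup>2)^l * A powr (-m))"
        unfolding coef_lemma[OF m(2) pp m(1)] alg_K[OF a0 rr0 AA y_def] ..
      also have "\<dots> = b l"
      proof -
        have "(4*\<rho>\<^sup>2*V/A\<^sup>2)^l = (4*\<rho>\<^sup>2/A\<^sup>2)^l * V^l"
          by (simp add: power_mult_distrib[symmetric] mult_ac)
        then show ?thesis unfolding b_def by (simp add: mult_ac)
      qed
      finally show ?thesis unfolding rr_def .
    qed
    ultimately show ?thesis by (simp add: Tform)
  qed
  have Thas: "((\<lambda>i. T l i) has_sum b l) UNIV" for l
  proof -
    have "T l summable_on UNIV" using summable_on_SigmaD1[of T UNIV "\<lambda>_. UNIV" l] Tsum by simp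
    then have "(T l has_sum infsum (T l) UNIV) UNIV" by simp
    moreover have "T l sums infsum (T l) UNIV" using calculation by (rule has_sum_imp_sums)
    then have "infsum (T l) UNIV = b l" using Tsums[of l] by (rule sums_unique2)
    ultimately show ?thesis by simp
  qed
  have bS: "(b has_sum S) UNIV"
    by (rule has_sum_Sigma'[OF TS]) (use Thas in simp)
  have bsums: "b sums S" by (rule has_sum_imp_sums[OF bS])
  have "(\<lambda>l. A powr m * b l) sums (A powr m * S)" by (rule sums_mult[OF bsums])
  moreover have "A powr m * b l = pochhammer pa l * pochhammer pb l / (pochhammer pc l * fact l) * (4 * \<rho>\<^sup>2 * s\<^sup>2 * (1-x\<^sup>2)/A\<^sup>2)^l" for l
  proof -
    have "A powr m * A powr (-m) = 1" using A0 by (simp add: powr_minus)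
    then show ?thesis unfolding b_def V_def by (simp add: mult_ac)
  qed
  ultimately have "(\<lambda>l. pochhammer pa l * pochhammer pb l / (pochhammer pc l * fact l) * (4 * \<rho>\<^sup>2 * s\<^sup>2 * (1-x\<^sup>2)/A\<^sup>2)^l) sums (A powr m * S)"
    by simp
  then have "A powr m * S = hyp2F1 pa pb pc (4 * \<rho>\<^sup>2 * s\<^sup>2 * (1-x\<^sup>2)/A\<^sup>2)"
    unfolding hyp2F1_def by (rule sums_unique)
  then have "S = hyp2F1 pa pb pc (4 * \<rho>\<^sup>2 * s\<^sup>2 * (1-x\<^sup>2)/A\<^sup>2) / A powr m"
    using A0 by (simp add: field_simps)
  then show ?thesis using has_sum_imp_sums[OF PA] unfolding A_def by simp
qed



lemma w_le1:
  assumes "x \<in> {-1..1::real}" "nu \<ge> 0"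
  shows "(1-x\<^sup>2) powr nu \<le> 1"
proof -
  have h: "0 \<le> 1-x\<^sup>2" using sq_le1[OF assms(1)] .
  then have "\<bar>1-x\<^sup>2\<bar> \<le> 1" by simp
  then show ?thesis using assms(2) by (intro powr_le1)
qed

lemma Pj_bound:
  assumes "nu \<ge> 0" "c\<^sup>2+s\<^sup>2=1" "x \<in> {-1..1}"
  shows "\<bar>Pj nu c s j x\<bar> \<le> 1"
proof -
  have V0: "0 \<le> s\<^sup>2*(1-x\<^sup>2)" using sq_le1[OF assms(3)] by simp
  have "\<bar>Pj nu c s j x\<bar> \<le> (\<Sum>l\<le>j div 2. \<bar>real (j choose (2*l)) * (c*x)^(j-2*l) * (s\<^sup>2*(1-x\<^sup>2))^l * mu nu l\<bar>)"
    unfolding Pj_def by (rule sum_abs)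
  also have "\<dots> = (\<Sum>l\<le>j div 2. real (j choose (2*l)) * \<bar>c*x\<bar>^(j-2*l) * (s\<^sup>2*(1-x\<^sup>2))^l * mu nu l)"
    using V0 mu_bounds(1)[OF assms(1)] sq_le1[OF assms(3)] by (intro sum.cong) (auto simp: abs_mult power_abs)
  also have "\<dots> \<le> 1" by (rule Pbound[OF V0 CS[OF assms(2,3)] assms(1)])
  finally show ?thesis .
qed

lemma R3:
  fixes m nu \<rho> c s pa pb pc \<beta> :: real
  assumes m: "m \<ge> 1/2" "nu = m - 1/2" and r: "0 \<le> \<rho>" "\<rho> < 1" and cs: "c\<^sup>2+s\<^sup>2=1"
    and pp: "pa = m/2" "pb = (m+1)/2" "pc = m + 1/2"
  defines "f \<equiv> (\<lambda>x. (\<beta> * \<rho> * c - x) * (1-x\<^sup>2) powr nu / (1+\<rho>\<^sup>2-2*\<rho>*x*c) powr m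
      * hyp2F1 pa pb pc (4 * \<rho>\<^sup>2 * s\<^sup>2 * (1-x\<^sup>2)/(1+\<rho>\<^sup>2-2*\<rho>*x*c)\<^sup>2))"
  shows "f integrable_on {-1..1}"
    "(\<lambda>N. c * (\<Sum>j<N. aco m \<rho> j * (\<beta>*\<rho>*Mom nu j - Mom nu (j+1)))) \<longlonglongrightarrow> integral {-1..1} f"
proof -
  have nu0: "nu \<ge> 0" using m by simp
  define g where "g N x = (\<beta> * \<rho> * c - x) * (1-x\<^sup>2) powr nu * (\<Sum>j<N. aco m \<rho> j * Pj nu c s j x)" for N x
  have aco_nn: "aco m \<rho> j \<ge> 0" for j
    unfolding aco_def using r m by (intro mult_nonneg_nonneg divide_nonneg_nonneg pochhammer_nonneg) auto
  have aco_summ: "summable (aco m \<rho>)"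
  proof -
    have "(\<lambda>j. aco m \<rho> j * Pj nu c s j 1) sums (hyp2F1 pa pb pc (4 * \<rho>\<^sup>2 * s\<^sup>2 * (1-1\<^sup>2)/(1+\<rho>\<^sup>2-2*\<rho>*1*c)\<^sup>2) / (1+\<rho>\<^sup>2-2*\<rho>*1*c) powr m)"
      by (rule R1[OF m r cs _ pp]) simp
    have "(\<lambda>j. aco m \<rho> j * Pj nu 1 0 j 1) sums (hyp2F1 pa pb pc (4 * \<rho>\<^sup>2 * 0\<^sup>2 * (1-1\<^sup>2)/(1+\<rho>\<^sup>2-2*\<rho>*1*1)\<^sup>2) / (1+\<rho>\<^sup>2-2*\<rho>*1*1) powr m)"
      by (rule R1[OF m r _ _ pp]) simp_all
    moreover have "Pj nu 1 0 j 1 = 1" for j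
    proof -
      have "Pj nu 1 0 j 1 = (\<Sum>l\<le>j div 2. (if l = 0 then 1 else 0))"
        unfolding Pj_def by (intro sum.cong) (auto simp: mu_def)
      also have "\<dots> = 1" by simp
      finally show ?thesis .
    qed
    ultimately show ?thesis by (simp add: sums_iff)
  qed
  define L where "L = suminf (aco m \<rho>)"
  define K where "K = (\<bar>\<beta> * \<rho> * c\<bar> + 1) * L"
  have intg: "(g N has_integral c * (\<Sum>j<N. aco m \<rho> j * (\<beta>*\<rho>*Mom nu j - Mom nu (j+1)))) {-1..1}" for N
  proof -
    have "((\<lambda>x. \<Sum>j<N. aco m \<rho> j * ((\<beta>*\<rho>*c) * (Pj nu c s j x * (1-x\<^sup>2) powr nu) - x * Pj nu c s j x * (1-x\<^sup>2) powr nu))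
       has_integral (\<Sum>j<N. aco m \<rho> j * ((\<beta>*\<rho>*c) * Mom nu j - c * Mom nu (j+1)))) {-1..1}"
      by (intro has_integral_sum has_integral_mult_right has_integral_diff R2[OF nu0 cs]) auto
    moreover have "(\<Sum>j<N. aco m \<rho> j * ((\<beta>*\<rho>*c) * Mom nu j - c * Mom nu (j+1))) = c * (\<Sum>j<N. aco m \<rho> j * (\<beta>*\<rho>*Mom nu j - Mom nu (j+1)))"
      by (simp add: sum_distrib_left algebra_simps)
    moreover have "(\<Sum>j<N. aco m \<rho> j * ((\<beta>*\<rho>*c) * (Pj nu c s j x * (1-x\<^sup>2) powr nu) - x * Pj nu c s j x * (1-x\<^sup>2) powr nu)) = g N x" for x
      unfolding g_def sum_distrib_left by (intro sum.cong) (auto simp: algebra_simps)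
    ultimately show ?thesis by simp
  qed
  have bound: "norm (g N x) \<le> K" if x: "x \<in> {-1..1}" for N x
  proof -
    have "\<bar>\<Sum>j<N. aco m \<rho> j * Pj nu c s j x\<bar> \<le> (\<Sum>j<N. aco m \<rho> j)"
    proof -
      have "\<bar>\<Sum>j<N. aco m \<rho> j * Pj nu c s j x\<bar> \<le> (\<Sum>j<N. \<bar>aco m \<rho> j * Pj nu c s j x\<bar>)" by (rule sum_abs)
      also have "\<dots> \<le> (\<Sum>j<N. aco m \<rho> j)"
      proof (rule sum_mono)
        fix j assume "j \<in> {..<N}"
        have "\<bar>aco m \<rho> j * Pj nu c s j x\<bar> = aco m \<rho> j * \<bar>Pj nu c s j x\<bar>" using aco_nn[of j] by (simp add: abs_mult)
        also have "\<dots> \<le> aco m \<rho> j * 1" by (rule mult_left_mono[OF Pj_bound[OF nu0 cs x] aco_nn])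
        finally show "\<bar>aco m \<rho> j * Pj nu c s j x\<bar> \<le> aco m \<rho> j" by simp
      qed
      finally show ?thesis .
    qed
    also have "\<dots> \<le> L" unfolding L_def using aco_summ aco_nn by (intro sum_le_suminf) auto
    finally have s1: "\<bar>\<Sum>j<N. aco m \<rho> j * Pj nu c s j x\<bar> \<le> L" .
    have s2: "\<bar>\<beta> * \<rho> * c - x\<bar> \<le> \<bar>\<beta> * \<rho> * c\<bar> + 1" using x by auto
    have s3: "\<bar>(1-x\<^sup>2) powr nu\<bar> \<le> 1" using w_le1[OF x nu0] by simp
    have "norm (g N x) = \<bar>\<beta> * \<rho> * c - x\<bar> * \<bar>(1-x\<^sup>2) powr nu\<bar> * \<bar>\<Sum>j<N. aco m \<rho> j * Pj nu c s j x\<bar>"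
      unfolding g_def by (simp add: abs_mult)
    also have "\<dots> \<le> (\<bar>\<beta> * \<rho> * c\<bar> + 1) * 1 * L"
      by (intro mult_mono s1 s2 s3) auto
    finally show ?thesis unfolding K_def by simp
  qed
  have conv: "(\<lambda>N. g N x) \<longlonglongrightarrow> f x" if x: "x \<in> {-1..1}" for x
  proof -
    have "(\<lambda>j. aco m \<rho> j * Pj nu c s j x) sums (hyp2F1 pa pb pc (4 * \<rho>\<^sup>2 * s\<^sup>2 * (1-x\<^sup>2)/(1+\<rho>\<^sup>2-2*\<rho>*x*c)\<^sup>2) / (1+\<rho>\<^sup>2-2*\<rho>*x*c) powr m)"
      by (rule R1[OF m r cs x pp])
    then have "(\<lambda>N. \<Sum>j<N. aco m \<rho> j * Pj nu c s j x) \<longlonglongrightarrow> (hyp2F1 pa pb pc (4 * \<rho>\<^sup>2 * s\<^sup>2 * (1-x\<^sup>2)/(1+\<rho>\<^sup>2-2*\<rho>*x*c)\<^sup>2) / (1+\<rho>\<^sup>2-2*\<rho>*x*c) powr m)"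
      by (simp add: sums_def)
    then have "(\<lambda>N. (\<beta> * \<rho> * c - x) * (1-x\<^sup>2) powr nu * (\<Sum>j<N. aco m \<rho> j * Pj nu c s j x)) \<longlonglongrightarrow>
        (\<beta> * \<rho> * c - x) * (1-x\<^sup>2) powr nu * (hyp2F1 pa pb pc (4 * \<rho>\<^sup>2 * s\<^sup>2 * (1-x\<^sup>2)/(1+\<rho>\<^sup>2-2*\<rho>*x*c)\<^sup>2) / (1+\<rho>\<^sup>2-2*\<rho>*x*c) powr m)"
      by (rule tendsto_mult_left)
    then show ?thesis unfolding g_def f_def by (simp add: mult_ac)
  qed
  have Kint: "(\<lambda>x. K) integrable_on {-1..1::real}" by (rule Henstock_Kurzweil_Integration.integrable_const_ivl)
  have gint: "g N integrable_on {-1..1}" for N using intg by blast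
  show "f integrable_on {-1..1}"
    by (rule dominated_convergence(1)[OF gint Kint bound conv])
  have "(\<lambda>N. integral {-1..1} (g N)) \<longlonglongrightarrow> integral {-1..1} f"
    by (rule dominated_convergence(2)[OF gint Kint bound conv])
  moreover have "integral {-1..1} (g N) = c * (\<Sum>j<N. aco m \<rho> j * (\<beta>*\<rho>*Mom nu j - Mom nu (j+1)))" for N
    using intg[of N] by (rule integral_unique)
  ultimately show "(\<lambda>N. c * (\<Sum>j<N. aco m \<rho> j * (\<beta>*\<rho>*Mom nu j - Mom nu (j+1)))) \<longlonglongrightarrow> integral {-1..1} f"
    by simp
qed



lemma Apos:
  fixes \<rho> x :: real
  assumes "\<bar>\<rho>\<bar> < 1" "\<bar>x\<bar> \<le> 1"
  shows "1 + \<rho>\<^sup>2 - 2*\<rho>*x > 0"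
proof -
  have "2*\<rho>*x \<le> 2*\<bar>\<rho>\<bar>"
  proof -
    have "\<rho>*x \<le> \<bar>\<rho>*x\<bar>" by simp
    also have "\<dots> = \<bar>\<rho>\<bar>*\<bar>x\<bar>" by (simp add: abs_mult)
    also have "\<dots> \<le> \<bar>\<rho>\<bar>" using assms(2) by (simp add: mult_left_le)
    finally show ?thesis by simp
  qed
  moreover have "0 < (1 - \<bar>\<rho>\<bar>)\<^sup>2" using assms(1) by simp
  moreover have "(1 - \<bar>\<rho>\<bar>)\<^sup>2 = 1 + \<rho>\<^sup>2 - 2*\<bar>\<rho>\<bar>" by (simp add: power2_eq_square algebra_simps)
  ultimately show ?thesis by linarith
qed

lemma Leib:
  fixes f f' :: "real \<Rightarrow> real \<Rightarrow> real"
  assumes der: "\<And>\<rho> x. \<rho> \<in> {-1<..<1} \<Longrightarrow> x \<in> {-1..1} \<Longrightarrow> ((\<lambda>\<rho>. f \<rho> x) has_real_derivative f' \<rho> x) (at \<rho>)"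
    and cf: "\<And>\<rho>. \<rho> \<in> {-1<..<1} \<Longrightarrow> continuous_on {-1..1} (f \<rho>)"
    and cf': "continuous_on ({-1<..<1} \<times> {-1..1}) (\<lambda>p. f' (fst p) (snd p))"
    and r: "\<rho>0 \<in> {-1<..<1}"
  shows "((\<lambda>\<rho>. integral {-1..1} (f \<rho>)) has_real_derivative integral {-1..1} (f' \<rho>0)) (at \<rho>0)"
proof -
  have "((\<lambda>\<rho>. integral (cbox (-1) 1) (f \<rho>)) has_field_derivative integral (cbox (-1) 1) (f' \<rho>0)) (at \<rho>0 within {-1<..<1})"
  proof (rule leibniz_rule_field_derivative)
    fix \<rho> x :: real assume "\<rho> \<in> {-1<..<1}" "x \<in> cbox (-1) 1"
    then show "((\<lambda>\<rho>. f \<rho> x) has_field_derivative f' \<rho> x) (at \<rho> within {-1<..<1})"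
      using der by (auto intro: has_field_derivative_at_within)
  next
    fix \<rho> :: real assume "\<rho> \<in> {-1<..<1}"
    then show "f \<rho> integrable_on cbox (-1) 1" using cf by (auto intro: integrable_continuous_interval)
  next
    show "continuous_on ({-1<..<1} \<times> cbox (-1) 1) (\<lambda>(\<rho>, x). f' \<rho> x)"
      using cf' by (simp add: case_prod_beta)
  next
    show "\<rho>0 \<in> {-1<..<1}" by (rule r)
  next
    show "convex {-1<..<1::real}" by (rule convex_real_interval)
  qed
  moreover have "at \<rho>0 within {-1<..<1} = at \<rho>0" by (rule at_within_open[OF r]) simp
  moreover have "cbox (-1) 1 = {-1..1::real}" by simp
  ultimately show ?thesis by simp
qed

definition wc :: "real \<Rightarrow> real \<Rightarrow> real" where
  "wc nu x = (if nu = 0 then 1 else (1-x\<^sup>2) powr nu)"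

lemma wc_cont: "nu \<ge> 0 \<Longrightarrow> continuous_on {-1..1} (wc nu)"
proof (cases "nu = 0")
  case True then show ?thesis unfolding wc_def by simp
next
  case False
  assume "nu \<ge> 0"
  have "continuous_on {-1..1} (\<lambda>x::real. (1-x\<^sup>2) powr nu)"
    apply (rule continuous_on_powr')
      apply (intro continuous_intros)
     apply (intro continuous_intros)
    using False sq_le1 \<open>nu \<ge> 0\<close> by auto
  then show ?thesis unfolding wc_def using False by simp
qed

lemma wc_eq: "x \<in> {-1<..<1} \<Longrightarrow> wc nu x = (1-x\<^sup>2) powr nu"
proof -
  assume "x \<in> {-1<..<1}"
  then have "1 - x\<^sup>2 \<noteq> 0" using sq_lt1[of x] by auto
  then show ?thesis unfolding wc_def by auto
qed



definition AA :: "real \<Rightarrow> real \<Rightarrow> real" where "AA \<rho> x = 1 + \<rho>\<^sup>2 - 2*\<rho>*x"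

definition g0 :: "real \<Rightarrow> (real \<Rightarrow> real) \<Rightarrow> real \<Rightarrow> real \<Rightarrow> real" where
  "g0 m h \<rho> x = h x * AA \<rho> x powr (-m)"
definition g1 :: "real \<Rightarrow> (real \<Rightarrow> real) \<Rightarrow> real \<Rightarrow> real \<Rightarrow> real" where
  "g1 m h \<rho> x = h x * ((-m) * AA \<rho> x powr (-m-1) * (2*\<rho> - 2*x))"
definition g2 :: "real \<Rightarrow> (real \<Rightarrow> real) \<Rightarrow> real \<Rightarrow> real \<Rightarrow> real" where
  "g2 m h \<rho> x = h x * ((-m) * ((-m-1) * AA \<rho> x powr (-m-2) * (2*\<rho>-2*x) * (2*\<rho>-2*x) + AA \<rho> x powr (-m-1) * 2))"

lemma AA_pos: "\<rho> \<in> {-1<..<1} \<Longrightarrow> x \<in> {-1..1} \<Longrightarrow> AA \<rho> x > 0"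
  unfolding AA_def by (rule Apos) auto

lemma AA_der: "((\<lambda>\<rho>. AA \<rho> x) has_real_derivative (2*\<rho> - 2*x)) (at \<rho>)"
  unfolding AA_def by (auto intro!: derivative_eq_intros simp: power2_eq_square)

lemma AAx_der: "((\<lambda>x. AA \<rho> x) has_real_derivative (-2*\<rho>)) (at x)"
  unfolding AA_def by (auto intro!: derivative_eq_intros)

lemma AA_powr_der:
  assumes "AA \<rho> x > 0"
  shows "((\<lambda>\<rho>. AA \<rho> x powr p) has_real_derivative p * AA \<rho> x powr (p - 1) * (2*\<rho> - 2*x)) (at \<rho>)"
  using DERIV_fun_powr[OF AA_der assms, of p] by simp

lemma der_g0:
  assumes "\<rho> \<in> {-1<..<1}" "x \<in> {-1..1}"
  shows "((\<lambda>\<rho>. g0 m h \<rho> x) has_real_derivative g1 m h \<rho> x) (at \<rho>)"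
proof -
  have A: "AA \<rho> x > 0" using AA_pos assms by blast
  have "((\<lambda>\<rho>. h x * AA \<rho> x powr (-m)) has_real_derivative h x * ((-m) * AA \<rho> x powr (-m - 1) * (2*\<rho> - 2*x))) (at \<rho>)"
    by (rule DERIV_cmult[OF AA_powr_der[OF A]])
  then show ?thesis unfolding g0_def g1_def .
qed

lemma der_g1:
  assumes "\<rho> \<in> {-1<..<1}" "x \<in> {-1..1}"
  shows "((\<lambda>\<rho>. g1 m h \<rho> x) has_real_derivative g2 m h \<rho> x) (at \<rho>)"
proof -
  have A: "AA \<rho> x > 0" using AA_pos assms by blast
  have d1: "((\<lambda>\<rho>. AA \<rho> x powr (-m-1)) has_real_derivative (-m-1) * AA \<rho> x powr (-m-2) * (2*\<rho> - 2*x)) (at \<rho>)"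
  proof -
    have e: "-m-1-1 = -m-2" by simp
    show ?thesis using AA_powr_der[OF A, of "-m-1"] unfolding e .
  qed
  have d2: "((\<lambda>\<rho>. 2*\<rho> - 2*x) has_real_derivative 2) (at \<rho>)"
    by (auto intro!: derivative_eq_intros)
  have "((\<lambda>\<rho>. AA \<rho> x powr (-m-1) * (2*\<rho> - 2*x)) has_real_derivative
      (-m-1) * AA \<rho> x powr (-m-2) * (2*\<rho> - 2*x) * (2*\<rho> - 2*x) + AA \<rho> x powr (-m-1) * 2) (at \<rho>)"
    using DERIV_mult'[OF d1 d2] by (simp add: algebra_simps)
  from DERIV_cmult[OF this, of "h x * (-m)"]
  show ?thesis unfolding g1_def g2_def by (simp add: mult_ac)
qed

lemma cont_snd:
  assumes "continuous_on {-1..1} h"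
  shows "continuous_on ({-1<..<1} \<times> {-1..1}) (\<lambda>p::real\<times>real. h (snd p))"
  by (rule continuous_on_compose2[OF assms continuous_on_snd]) auto

lemma contAA:
  "continuous_on ({-1<..<1} \<times> {-1..1}) (\<lambda>p::real\<times>real. AA (fst p) (snd p) powr q)"
proof (rule continuous_on_powr)
  show "continuous_on ({-1<..<1} \<times> {-1..1}) (\<lambda>p::real\<times>real. AA (fst p) (snd p))"
    unfolding AA_def by (intro continuous_intros)
  show "\<forall>p\<in>{-1<..<1} \<times> {-1..1}. AA (fst p) (snd p) \<noteq> 0"
    using AA_pos by (auto simp: less_imp_le) (metis AA_pos greaterThanLessThan_iff atLeastAtMost_iff less_irrefl)
qed (intro continuous_intros)

lemma contj1:
  assumes "continuous_on {-1..1} h"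
  shows "continuous_on ({-1<..<1} \<times> {-1..1}) (\<lambda>p. g1 m h (fst p) (snd p))"
  unfolding g1_def
  by (intro continuous_on_mult cont_snd[OF assms] contAA continuous_intros)

lemma contj2:
  assumes "continuous_on {-1..1} h"
  shows "continuous_on ({-1<..<1} \<times> {-1..1}) (\<lambda>p. g2 m h (fst p) (snd p))"
  unfolding g2_def
  by (intro continuous_on_mult continuous_on_add cont_snd[OF assms] contAA continuous_intros)

lemma cont_x:
  assumes "continuous_on ({-1<..<1} \<times> {-1..1}) (\<lambda>p::real\<times>real. F (fst p) (snd p))" "\<rho> \<in> {-1<..<1}"
  shows "continuous_on {-1..1} (F \<rho>)"
proof -
  have "continuous_on {-1..1} (\<lambda>x. (\<lambda>p. F (fst p) (snd p)) (\<rho>, x))"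
    by (rule continuous_on_compose2[OF assms(1)]) (use assms(2) in \<open>auto intro!: continuous_intros\<close>)
  then show ?thesis by simp
qed

lemma contj0:
  assumes "continuous_on {-1..1} h"
  shows "continuous_on ({-1<..<1} \<times> {-1..1}) (\<lambda>p. g0 m h (fst p) (snd p))"
  unfolding g0_def
  by (intro continuous_on_mult cont_snd[OF assms] contAA continuous_intros)

lemma Dder0:
  assumes "continuous_on {-1..1} h" "\<rho> \<in> {-1<..<1}"
  shows "((\<lambda>\<rho>. integral {-1..1} (g0 m h \<rho>)) has_real_derivative integral {-1..1} (g1 m h \<rho>)) (at \<rho>)"
  by (rule Leib[OF der_g0 cont_x[OF contj0[OF assms(1)]] contj1[OF assms(1)] assms(2)])

lemma Dder1:
  assumes "continuous_on {-1..1} h" "\<rho> \<in> {-1<..<1}"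
  shows "((\<lambda>\<rho>. integral {-1..1} (g1 m h \<rho>)) has_real_derivative integral {-1..1} (g2 m h \<rho>)) (at \<rho>)"
  by (rule Leib[OF der_g1 cont_x[OF contj1[OF assms(1)]] contj2[OF assms(1)] assms(2)])



definition Qf :: "real \<Rightarrow> real \<Rightarrow> real \<Rightarrow> real \<Rightarrow> real" where
  "Qf m nu \<rho> x = (1-x\<^sup>2) powr (nu+1) * (2*m*\<rho>*AA \<rho> x powr (-m-1))"
definition Uf :: "real \<Rightarrow> real \<Rightarrow> real \<Rightarrow> real \<Rightarrow> real" where
  "Uf m nu \<rho> x = (1-x\<^sup>2) powr (nu+1) * AA \<rho> x powr (-m)"

lemma W_der:
  fixes x nu :: real
  assumes "x \<in> {-1<..<1}"
  shows "((\<lambda>x. (1-x\<^sup>2) powr (nu+1)) has_real_derivative (nu+1) * (1-x\<^sup>2) powr nu * (-2*x)) (at x)"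
proof -
  have pos: "1 - x\<^sup>2 > 0" using sq_lt1[of x] assms by auto
  have d: "((\<lambda>x. 1-x\<^sup>2) has_real_derivative -2*x) (at x)" by (auto intro!: derivative_eq_intros)
  show ?thesis using DERIV_fun_powr[OF d pos, of "nu+1"] by simp
qed

lemma AAx_powr_der:
  assumes "AA \<rho> x > 0"
  shows "((\<lambda>x. AA \<rho> x powr p) has_real_derivative p * AA \<rho> x powr (p - 1) * (-2*\<rho>)) (at x)"
  using DERIV_fun_powr[OF AAx_der assms, of p] by simp

lemma Q_der:
  assumes "x \<in> {-1<..<1}" "\<rho> \<in> {-1<..<1}"
  shows "((\<lambda>x. Qf m nu \<rho> x) has_real_derivative
    (nu+1) * (1-x\<^sup>2) powr nu * (-2*x) * (2*m*\<rho>*AA \<rho> x powr (-m-1)) + 2*m*\<rho>*((-m-1) * AA \<rho> x powr (-m-2) * (-2*\<rho>)) * (1-x\<^sup>2) powr (nu+1)) (at x)"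
proof -
  have A: "AA \<rho> x > 0" using AA_pos assms by auto
  have d2: "((\<lambda>x. AA \<rho> x powr (-m-1)) has_real_derivative (-m-1) * AA \<rho> x powr (-m-2) * (-2*\<rho>)) (at x)"
  proof -
    have e: "-m-1-1 = -m-2" by simp
    show ?thesis using AAx_powr_der[OF A, of "-m-1"] unfolding e .
  qed
  have d3: "((\<lambda>x. 2*m*\<rho>*AA \<rho> x powr (-m-1)) has_real_derivative 2*m*\<rho>*((-m-1) * AA \<rho> x powr (-m-2) * (-2*\<rho>))) (at x)"
    by (rule DERIV_cmult[OF d2])
  show ?thesis unfolding Qf_def using DERIV_mult[OF W_der[of x nu, OF assms(1)] d3] .
qed

lemma U_der:
  assumes "x \<in> {-1<..<1}" "\<rho> \<in> {-1<..<1}"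
  shows "((\<lambda>x. Uf m nu \<rho> x) has_real_derivative
    (nu+1) * (1-x\<^sup>2) powr nu * (-2*x) * AA \<rho> x powr (-m) + (-m) * AA \<rho> x powr (-m-1) * (-2*\<rho>) * (1-x\<^sup>2) powr (nu+1)) (at x)"
proof -
  have A: "AA \<rho> x > 0" using AA_pos assms by auto
  have d2: "((\<lambda>x. AA \<rho> x powr (-m)) has_real_derivative (-m) * AA \<rho> x powr (-m-1) * (-2*\<rho>)) (at x)"
    using AAx_powr_der[OF A, of "-m"] by simp
  show ?thesis unfolding Uf_def using DERIV_mult[OF W_der[of x nu, OF assms(1)] d2] .
qed

lemma powr_split:
  fixes A m :: real
  assumes "A > 0"
  shows "A powr (-m-1) = A powr (-m-2) * A" "A powr (-m) = A powr (-m-2) * A * A"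
proof -
  have e1: "(-m-2) + 1 = -m-1" by simp
  have "A powr (-m-1) = A powr ((-m-2) + 1)" by (simp only: e1)
  also have "\<dots> = A powr (-m-2) * A powr 1" by (rule powr_add)
  also have "A powr 1 = A" using assms by simp
  finally show "A powr (-m-1) = A powr (-m-2) * A" .
  have e2: "(-m-2) + 1 + 1 = -m" by simp
  have "A powr (-m) = A powr ((-m-2) + 1 + 1)" by (simp only: e2)
  also have "\<dots> = A powr (-m-2) * A powr 1 * A powr 1" by (simp only: powr_add)
  also have "A powr 1 = A" using assms by simp
  finally show "A powr (-m) = A powr (-m-2) * A * A" .
qed

lemma w_split:
  fixes x nu :: real
  assumes "x \<in> {-1<..<1}"
  shows "(1-x\<^sup>2) powr (nu+1) = (1-x\<^sup>2) powr nu * (1-x\<^sup>2)"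
proof -
  have pos: "1 - x\<^sup>2 > 0" using sq_lt1[of x] assms by auto
  then show ?thesis by (simp add: powr_add)
qed

lemma PDE:
  assumes x: "x \<in> {-1<..<1}" and r: "\<rho> \<in> {-1<..<1}" and nu: "nu = m - 1/2"
  shows "\<rho>\<^sup>2 * g2 m (wc nu) \<rho> x + (2*m+1)*\<rho>*g1 m (wc nu) \<rho> x
    + ((nu+1) * (1-x\<^sup>2) powr nu * (-2*x) * (2*m*\<rho>*AA \<rho> x powr (-m-1)) + 2*m*\<rho>*((-m-1) * AA \<rho> x powr (-m-2) * (-2*\<rho>)) * (1-x\<^sup>2) powr (nu+1)) = 0"
proof -
  have A: "AA \<rho> x > 0" using AA_pos x r by auto
  define P where "P = (1-x\<^sup>2) powr nu"
  define Z where "Z = AA \<rho> x powr (-m-2)"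
  have wcP: "wc nu x = P" unfolding P_def using wc_eq[OF x] .
  have s1: "AA \<rho> x powr (-m-1) = Z * AA \<rho> x" unfolding Z_def by (rule powr_split(1)[OF A])
  have s3: "(1-x\<^sup>2) powr (nu+1) = P * (1-x\<^sup>2)" unfolding P_def by (rule w_split[OF x])
  show ?thesis
    unfolding g1_def g2_def wcP s1 s3
    unfolding Z_def[symmetric] P_def[symmetric]
    by (simp add: AA_def nu algebra_simps power2_eq_square)
qed

lemma UQ:
  assumes x: "x \<in> {-1<..<1}" and r: "\<rho> \<in> {-1<..<1}" and nu: "nu = m - 1/2"
  shows "((nu+1) * (1-x\<^sup>2) powr nu * (-2*x) * AA \<rho> x powr (-m) + (-m) * AA \<rho> x powr (-m-1) * (-2*\<rho>) * (1-x\<^sup>2) powr (nu+1))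
     - Qf m nu \<rho> x = - (2*m+1) * (x * wc nu x * AA \<rho> x powr (-m))"
proof -
  have A: "AA \<rho> x > 0" using AA_pos x r by auto
  define P where "P = (1-x\<^sup>2) powr nu"
  have wcP: "wc nu x = P" unfolding P_def using wc_eq[OF x] .
  show ?thesis
    unfolding Qf_def wcP
    unfolding P_def[symmetric]
    by (simp add: nu algebra_simps)
qed



lemma contAAx: "\<rho> \<in> {-1<..<1} \<Longrightarrow> continuous_on {-1..1} (\<lambda>x. AA \<rho> x powr q)"
  using cont_x[of "\<lambda>\<rho> x. AA \<rho> x powr q", OF contAA] by simp

lemma contW1:
  assumes "nu \<ge> 0"
  shows "continuous_on {-1..1} (\<lambda>x::real. (1-x\<^sup>2) powr (nu+1))"
  apply (rule continuous_on_powr')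
    apply (intro continuous_intros)
   apply (intro continuous_intros)
  using assms sq_le1 by auto

lemma W_end: "(1 - (1::real)\<^sup>2) powr (nu+1) = 0" "(1 - (-1::real)\<^sup>2) powr (nu+1) = 0"
  by simp_all

lemma FTC_D:
  assumes r: "\<rho> \<in> {-1<..<1}" and nu: "nu = m - 1/2" and m: "m \<ge> 1/2"
  shows "((\<lambda>x. \<rho>\<^sup>2 * g2 m (wc nu) \<rho> x + (2*m+1)*\<rho>*g1 m (wc nu) \<rho> x) has_integral 0) {-1..1}"
proof -
  have nu0: "nu \<ge> 0" using nu m by simp
  define F where "F = (\<lambda>x. - Qf m nu \<rho> x)"
  have cont: "continuous_on {-1..1} F"
    unfolding F_def Qf_def
    by (intro continuous_intros contW1[OF nu0] contAAx[OF r])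
  have der: "(F has_vector_derivative (\<rho>\<^sup>2 * g2 m (wc nu) \<rho> x + (2*m+1)*\<rho>*g1 m (wc nu) \<rho> x)) (at x)"
    if x: "x \<in> {-1<..<1}" for x
  proof -
    have "(F has_real_derivative - ((nu+1) * (1-x\<^sup>2) powr nu * (-2*x) * (2*m*\<rho>*AA \<rho> x powr (-m-1)) + 2*m*\<rho>*((-m-1) * AA \<rho> x powr (-m-2) * (-2*\<rho>)) * (1-x\<^sup>2) powr (nu+1))) (at x)"
      unfolding F_def by (rule DERIV_minus[OF Q_der[OF x r]])
    moreover have "- ((nu+1) * (1-x\<^sup>2) powr nu * (-2*x) * (2*m*\<rho>*AA \<rho> x powr (-m-1)) + 2*m*\<rho>*((-m-1) * AA \<rho> x powr (-m-2) * (-2*\<rho>)) * (1-x\<^sup>2) powr (nu+1))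
        = \<rho>\<^sup>2 * g2 m (wc nu) \<rho> x + (2*m+1)*\<rho>*g1 m (wc nu) \<rho> x"
      using PDE[OF x r nu] by linarith
    ultimately show ?thesis by (simp add: has_real_derivative_iff_has_vector_derivative)
  qed
  have "((\<lambda>x. \<rho>\<^sup>2 * g2 m (wc nu) \<rho> x + (2*m+1)*\<rho>*g1 m (wc nu) \<rho> x) has_integral (F 1 - F (-1))) {-1..1}"
    by (rule fundamental_theorem_of_calculus_interior) (use cont der in auto)
  moreover have "F 1 - F (-1) = 0" unfolding F_def Qf_def by simp
  ultimately show ?thesis by simp
qed

lemma FTC_E:
  assumes r: "\<rho> \<in> {-1<..<1}" and nu: "nu = m - 1/2" and m: "m \<ge> 1/2"
  shows "((\<lambda>x. x * (\<rho>\<^sup>2 * g2 m (wc nu) \<rho> x + (2*m+1)*\<rho>*g1 m (wc nu) \<rho> x) - (2*m+1) * (x * wc nu x * AA \<rho> x powr (-m))) has_integral 0) {-1..1}"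
proof -
  have nu0: "nu \<ge> 0" using nu m by simp
  define F where "F = (\<lambda>x. Uf m nu \<rho> x - x * Qf m nu \<rho> x)"
  have cont: "continuous_on {-1..1} F"
    unfolding F_def Qf_def Uf_def
    by (intro continuous_intros contW1[OF nu0] contAAx[OF r])
  have der: "(F has_vector_derivative (x * (\<rho>\<^sup>2 * g2 m (wc nu) \<rho> x + (2*m+1)*\<rho>*g1 m (wc nu) \<rho> x) - (2*m+1) * (x * wc nu x * AA \<rho> x powr (-m)))) (at x)"
    if x: "x \<in> {-1<..<1}" for x
  proof -
    define Qx where "Qx = (nu+1) * (1-x\<^sup>2) powr nu * (-2*x) * (2*m*\<rho>*AA \<rho> x powr (-m-1)) + 2*m*\<rho>*((-m-1) * AA \<rho> x powr (-m-2) * (-2*\<rho>)) * (1-x\<^sup>2) powr (nu+1)"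
    define Ux where "Ux = (nu+1) * (1-x\<^sup>2) powr nu * (-2*x) * AA \<rho> x powr (-m) + (-m) * AA \<rho> x powr (-m-1) * (-2*\<rho>) * (1-x\<^sup>2) powr (nu+1)"
    have dQ: "((\<lambda>x. Qf m nu \<rho> x) has_real_derivative Qx) (at x)" unfolding Qx_def by (rule Q_der[OF x r])
    have dU: "((\<lambda>x. Uf m nu \<rho> x) has_real_derivative Ux) (at x)" unfolding Ux_def by (rule U_der[OF x r])
    have dxQ: "((\<lambda>x. x * Qf m nu \<rho> x) has_real_derivative (x * Qx + Qf m nu \<rho> x)) (at x)"
      using DERIV_mult'[OF DERIV_ident dQ] by simp
    have "(F has_real_derivative (Ux - (x * Qx + Qf m nu \<rho> x))) (at x)"
      unfolding F_def by (rule DERIV_diff[OF dU dxQ])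
    moreover have "Ux - (x * Qx + Qf m nu \<rho> x) = x * (\<rho>\<^sup>2 * g2 m (wc nu) \<rho> x + (2*m+1)*\<rho>*g1 m (wc nu) \<rho> x) - (2*m+1) * (x * wc nu x * AA \<rho> x powr (-m))"
    proof -
      have p: "\<rho>\<^sup>2 * g2 m (wc nu) \<rho> x + (2*m+1)*\<rho>*g1 m (wc nu) \<rho> x = - Qx"
        using PDE[OF x r nu] unfolding Qx_def by linarith
      have u: "Ux - Qf m nu \<rho> x = - (2*m+1) * (x * wc nu x * AA \<rho> x powr (-m))"
        using UQ[OF x r nu] unfolding Ux_def .
      show ?thesis unfolding p using u by (simp add: algebra_simps)
    qed
    ultimately show ?thesis by (simp add: has_real_derivative_iff_has_vector_derivative)
  qed
  have "((\<lambda>x. x * (\<rho>\<^sup>2 * g2 m (wc nu) \<rho> x + (2*m+1)*\<rho>*g1 m (wc nu) \<rho> x) - (2*m+1) * (x * wc nu x * AA \<rho> x powr (-m))) has_integral (F 1 - F (-1))) {-1..1}"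
    by (rule fundamental_theorem_of_calculus_interior) (use cont der in auto)
  moreover have "F 1 - F (-1) = 0" unfolding F_def Qf_def Uf_def by simp
  ultimately show ?thesis by simp
qed



lemma hyp0: "hyp2F1 a b c 0 = 1"
proof -
  have "(\<lambda>k. pochhammer a k * pochhammer b k / (pochhammer c k * fact k) * 0 ^ k) sums
        (pochhammer a 0 * pochhammer b 0 / (pochhammer c 0 * fact 0))"
    by (rule powser_sums_zero)
  then show ?thesis unfolding hyp2F1_def by (simp add: sums_iff)
qed

lemma const_on_int:
  fixes f f' :: "real \<Rightarrow> real"
  assumes d: "\<And>\<rho>. \<rho> \<in> {-1<..<1} \<Longrightarrow> (f has_real_derivative f' \<rho>) (at \<rho>)"
    and z: "\<And>\<rho>. 0 < \<rho> \<Longrightarrow> \<rho> < \<rho>1 \<Longrightarrow> f' \<rho> = 0"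
    and r: "0 \<le> \<rho>1" "\<rho>1 < 1"
  shows "f \<rho>1 = f 0"
proof (cases "\<rho>1 = 0")
  case True then show ?thesis by simp
next
  case False
  with r have r0: "0 < \<rho>1" by simp
  have "continuous_on {0..\<rho>1} f"
  proof (rule continuous_at_imp_continuous_on, rule ballI)
    fix x assume "x \<in> {0..\<rho>1}"
    then have "x \<in> {-1<..<1}" using r by auto
    then show "isCont f x" using d DERIV_isCont by blast
  qed
  moreover have "(f has_real_derivative 0) (at x)" if "0 < x" "x < \<rho>1" for x
  proof -
    have "x \<in> {-1<..<1}" using that r by auto
    then show ?thesis using d[of x] z[OF that] by simp
  qed
  ultimately show ?thesis using DERIV_isconst2[of 0 \<rho>1 f \<rho>1] r0 by auto
qed

definition xw :: "real \<Rightarrow> real \<Rightarrow> real" where "xw nu x = x * wc nu x"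

lemma cont_xw: "nu \<ge> 0 \<Longrightarrow> continuous_on {-1..1} (xw nu)"
  unfolding xw_def by (intro continuous_intros wc_cont)

lemma int_g:
  assumes "continuous_on {-1..1} h" "\<rho> \<in> {-1<..<1}"
  shows "(g0 m h \<rho> has_integral integral {-1..1} (g0 m h \<rho>)) {-1..1}"
    "(g1 m h \<rho> has_integral integral {-1..1} (g1 m h \<rho>)) {-1..1}"
    "(g2 m h \<rho> has_integral integral {-1..1} (g2 m h \<rho>)) {-1..1}"
  using cont_x[OF contj0[OF assms(1)] assms(2)] cont_x[OF contj1[OF assms(1)] assms(2)]
    cont_x[OF contj2[OF assms(1)] assms(2)]
  by (auto intro!: integrable_integral integrable_continuous_interval)

lemma rel_D:
  assumes r: "\<rho> \<in> {-1<..<1}" and nu: "nu = m - 1/2" and m: "m \<ge> 1/2"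
  shows "\<rho>\<^sup>2 * integral {-1..1} (g2 m (wc nu) \<rho>) + (2*m+1)*\<rho>*integral {-1..1} (g1 m (wc nu) \<rho>) = 0"
proof -
  have nu0: "nu \<ge> 0" using nu m by simp
  have h: "((\<lambda>x. \<rho>\<^sup>2 * g2 m (wc nu) \<rho> x + (2*m+1)*\<rho>*g1 m (wc nu) \<rho> x) has_integral
      (\<rho>\<^sup>2 * integral {-1..1} (g2 m (wc nu) \<rho>) + (2*m+1)*\<rho>*integral {-1..1} (g1 m (wc nu) \<rho>))) {-1..1}"
    by (intro has_integral_add has_integral_mult_right int_g[OF wc_cont[OF nu0] r])
  show ?thesis using has_integral_unique[OF h FTC_D[OF r nu m]] .
qed

lemma rel_E:
  assumes r: "\<rho> \<in> {-1<..<1}" and nu: "nu = m - 1/2" and m: "m \<ge> 1/2"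
  shows "\<rho>\<^sup>2 * integral {-1..1} (g2 m (xw nu) \<rho>) + (2*m+1)*\<rho>*integral {-1..1} (g1 m (xw nu) \<rho>)
     - (2*m+1) * integral {-1..1} (g0 m (xw nu) \<rho>) = 0"
proof -
  have nu0: "nu \<ge> 0" using nu m by simp
  have h: "((\<lambda>x. \<rho>\<^sup>2 * g2 m (xw nu) \<rho> x + (2*m+1)*\<rho>*g1 m (xw nu) \<rho> x - (2*m+1) * g0 m (xw nu) \<rho> x) has_integral
      (\<rho>\<^sup>2 * integral {-1..1} (g2 m (xw nu) \<rho>) + (2*m+1)*\<rho>*integral {-1..1} (g1 m (xw nu) \<rho>)
       - (2*m+1) * integral {-1..1} (g0 m (xw nu) \<rho>))) {-1..1}"
    by (intro has_integral_add has_integral_diff has_integral_mult_right int_g[OF cont_xw[OF nu0] r])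
  have e: "(\<lambda>x. \<rho>\<^sup>2 * g2 m (xw nu) \<rho> x + (2*m+1)*\<rho>*g1 m (xw nu) \<rho> x - (2*m+1) * g0 m (xw nu) \<rho> x)
     = (\<lambda>x. x * (\<rho>\<^sup>2 * g2 m (wc nu) \<rho> x + (2*m+1)*\<rho>*g1 m (wc nu) \<rho> x) - (2*m+1) * (x * wc nu x * AA \<rho> x powr (-m)))"
    by (rule ext) (simp add: g0_def g1_def g2_def xw_def algebra_simps)
  show ?thesis using has_integral_unique[OF h[unfolded e] FTC_E[OF r nu m]] .
qed



lemma pow_split2:
  fixes \<rho> :: real
  assumes "k \<ge> 2"
  shows "\<rho>^(k - Suc 0) = \<rho>^(k-2) * \<rho>" "\<rho>^k = \<rho>^(k-2) * \<rho>\<^sup>2"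
proof -
  have "k - Suc 0 = (k-2) + 1" "k = (k-2) + 2" using assms by auto
  then show "\<rho>^(k - Suc 0) = \<rho>^(k-2) * \<rho>" "\<rho>^k = \<rho>^(k-2) * \<rho>\<^sup>2"
    by (metis power_add power_one_right, metis power_add)
qed

lemma R4:
  fixes n :: nat and \<rho> \<beta> m nu pa pb pc :: real
  assumes n: "n \<ge> 3" and mdef: "m = real n/2 - 1" and nu: "nu = m - 1/2" and r: "0 \<le> \<rho>" "\<rho> < 1"
    and \<beta>: "\<beta> = (real n - 2)/real n"
  shows "integral {-1..1} (\<lambda>x. (\<beta> * \<rho> * 1 - x) * (1-x\<^sup>2) powr nu / (1+\<rho>\<^sup>2-2*\<rho>*x*1) powr m
      * hyp2F1 pa pb pc (4 * \<rho>\<^sup>2 * 0\<^sup>2 * (1-x\<^sup>2)/(1+\<rho>\<^sup>2-2*\<rho>*x*1)\<^sup>2)) = 0"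
proof -
  have rn: "real n \<ge> 3" using n by simp
  have m: "m \<ge> 1/2" using rn mdef by simp
  have nu0: "nu \<ge> 0" using m nu by simp
  define k where "k = n - 1"
  have k2: "k \<ge> 2" using n unfolding k_def by simp
  have rk: "real k = 2*m+1" unfolding k_def mdef using n by (simp add: of_nat_diff)
  define D where "D = (\<lambda>\<rho>. integral {-1..1} (g0 m (wc nu) \<rho>))"
  define D1 where "D1 = (\<lambda>\<rho>. integral {-1..1} (g1 m (wc nu) \<rho>))"
  define D2 where "D2 = (\<lambda>\<rho>. integral {-1..1} (g2 m (wc nu) \<rho>))"
  define E where "E = (\<lambda>\<rho>. integral {-1..1} (g0 m (xw nu) \<rho>))"
  define E1 where "E1 = (\<lambda>\<rho>. integral {-1..1} (g1 m (xw nu) \<rho>))"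
  define E2 where "E2 = (\<lambda>\<rho>. integral {-1..1} (g2 m (xw nu) \<rho>))"
  have cw: "continuous_on {-1..1} (wc nu)" by (rule wc_cont[OF nu0])
  have cx: "continuous_on {-1..1} (xw nu)" by (rule cont_xw[OF nu0])
  have dD: "(D has_real_derivative D1 \<rho>) (at \<rho>)" if "\<rho> \<in> {-1<..<1}" for \<rho>
    unfolding D_def D1_def by (rule Dder0[OF cw that])
  have dD1: "(D1 has_real_derivative D2 \<rho>) (at \<rho>)" if "\<rho> \<in> {-1<..<1}" for \<rho>
    unfolding D1_def D2_def by (rule Dder1[OF cw that])
  have dE: "(E has_real_derivative E1 \<rho>) (at \<rho>)" if "\<rho> \<in> {-1<..<1}" for \<rho>
    unfolding E_def E1_def by (rule Dder0[OF cx that])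
  have dE1: "(E1 has_real_derivative E2 \<rho>) (at \<rho>)" if "\<rho> \<in> {-1<..<1}" for \<rho>
    unfolding E1_def E2_def by (rule Dder1[OF cx that])
  have rD: "\<rho>\<^sup>2 * D2 \<rho> + (2*m+1)*\<rho>*D1 \<rho> = 0" if "\<rho> \<in> {-1<..<1}" for \<rho>
    unfolding D1_def D2_def by (rule rel_D[OF that nu m])
  have rE: "\<rho>\<^sup>2 * E2 \<rho> + (2*m+1)*\<rho>*E1 \<rho> - (2*m+1) * E \<rho> = 0" if "\<rho> \<in> {-1<..<1}" for \<rho>
    unfolding E_def E1_def E2_def by (rule rel_E[OF that nu m])
  define H where "H = (\<lambda>\<rho>. \<rho>^k * D1 \<rho>)"
  have dH: "(H has_real_derivative 0) (at \<rho>)" if "\<rho> \<in> {-1<..<1}" for \<rho>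
  proof -
    have "(H has_real_derivative (real k * \<rho>^(k - Suc 0)) * D1 \<rho> + D2 \<rho> * \<rho>^k) (at \<rho>)"
      unfolding H_def by (rule DERIV_mult[OF DERIV_pow dD1[OF that]])
    moreover have "(real k * \<rho>^(k - Suc 0)) * D1 \<rho> + D2 \<rho> * \<rho>^k = \<rho>^(k-2) * (\<rho>\<^sup>2 * D2 \<rho> + (2*m+1)*\<rho>*D1 \<rho>)"
      unfolding pow_split2[OF k2] rk by (simp add: algebra_simps)
    ultimately show ?thesis using rD[OF that] by simp
  qed
  have D1z: "D1 \<rho> = 0" if "0 < \<rho>" "\<rho> < 1" for \<rho>
  proof -
    have "H \<rho> = H 0" by (rule const_on_int[OF dH]) (use that in auto)
    also have "H 0 = 0" unfolding H_def using k2 by simp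
    finally have "\<rho>^k * D1 \<rho> = 0" unfolding H_def .
    then show ?thesis using that by simp
  qed
  have Dc: "D \<rho> = D 0" if "0 \<le> \<rho>" "\<rho> < 1" for \<rho>
    by (rule const_on_int[OF dD]) (use that D1z in auto)
  define K where "K = (\<lambda>\<rho>. \<rho>^k * (\<rho> * E1 \<rho> - E \<rho>))"
  have dK: "(K has_real_derivative 0) (at \<rho>)" if "\<rho> \<in> {-1<..<1}" for \<rho>
  proof -
    have d1: "((\<lambda>\<rho>. \<rho> * E1 \<rho> - E \<rho>) has_real_derivative (1 * E1 \<rho> + E2 \<rho> * \<rho>) - E1 \<rho>) (at \<rho>)"
      by (rule DERIV_diff[OF DERIV_mult[OF DERIV_ident dE1[OF that]] dE[OF that]])
    have "(K has_real_derivative (real k * \<rho>^(k - Suc 0)) * (\<rho> * E1 \<rho> - E \<rho>) + ((1 * E1 \<rho> + E2 \<rho> * \<rho>) - E1 \<rho>) * \<rho>^k) (at \<rho>)"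
      unfolding K_def by (rule DERIV_mult[OF DERIV_pow d1])
    moreover have "(real k * \<rho>^(k - Suc 0)) * (\<rho> * E1 \<rho> - E \<rho>) + ((1 * E1 \<rho> + E2 \<rho> * \<rho>) - E1 \<rho>) * \<rho>^k
        = \<rho>^(k-2) * \<rho> * (\<rho>\<^sup>2 * E2 \<rho> + (2*m+1)*\<rho>*E1 \<rho> - (2*m+1) * E \<rho>)"
      unfolding pow_split2[OF k2] rk by (simp add: algebra_simps power2_eq_square)
    ultimately show ?thesis using rE[OF that] by simp
  qed
  have Ez: "\<rho> * E1 \<rho> = E \<rho>" if "0 < \<rho>" "\<rho> < 1" for \<rho>
  proof -
    have "K \<rho> = K 0" by (rule const_on_int[OF dK]) (use that in auto)
    also have "K 0 = 0" unfolding K_def using k2 by simp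
    finally have "\<rho>^k * (\<rho> * E1 \<rho> - E \<rho>) = 0" unfolding K_def .
    then show ?thesis using that by simp
  qed
  have E2z: "E2 \<rho> = 0" if "0 < \<rho>" "\<rho> < 1" for \<rho>
  proof -
    have rin: "\<rho> \<in> {-1<..<1}" using that by auto
    have a: "\<rho>\<^sup>2 * E2 \<rho> + (2*m+1)*\<rho>*E1 \<rho> - (2*m+1) * E \<rho> = 0" by (rule rE[OF rin])
    have b: "(2*m+1)*\<rho>*E1 \<rho> = (2*m+1) * E \<rho>" using Ez[OF that] by (simp add: mult.assoc)
    from a b have "\<rho>\<^sup>2 * E2 \<rho> = 0" by linarith
    then show ?thesis using that by simp
  qed
  have E1c: "E1 \<rho> = E1 0" if "0 \<le> \<rho>" "\<rho> < 1" for \<rho>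
    by (rule const_on_int[OF dE1]) (use that E2z in auto)
  have AA0: "AA 0 x = 1" for x by (simp add: AA_def)
  have spike: "(f has_integral I) {-1..1}" if "((\<lambda>x. g x * (1-x\<^sup>2) powr nu) has_integral I) {-1..1}"
      and "\<And>x. x \<in> {-1<..<1} \<Longrightarrow> f x = g x * (1-x\<^sup>2) powr nu" for f g I
  proof (rule has_integral_spike_finite[OF _ _ that(1), of "{-1,1}"])
    fix x assume "x \<in> {-1..1::real} - {-1,1}"
    then have "x \<in> {-1<..<1}" by auto
    then show "f x = g x * (1-x\<^sup>2) powr nu" by (rule that(2))
  qed simp
  have D0: "D 0 = Mom nu 0"
  proof -
    have "(g0 m (wc nu) 0 has_integral Mom nu 0) {-1..1}"
      by (rule spike[of "\<lambda>x. x^0", OF has_integral_mom[OF nu0]]) (simp add: g0_def AA0 wc_eq)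
    then show ?thesis unfolding D_def by (rule integral_unique)
  qed
  have E0: "E 0 = 0"
  proof -
    have "(g0 m (xw nu) 0 has_integral Mom nu (Suc (2*0))) {-1..1}"
      by (rule spike[of "\<lambda>x. x^(Suc (2*0))", OF has_integral_mom[OF nu0]]) (simp add: g0_def AA0 wc_eq xw_def)
    then show ?thesis unfolding E_def using mom_odd[OF nu0, of 0] by (simp add: integral_unique)
  qed
  have E10: "E1 0 = 2*m*Mom nu 2"
  proof -
    have "((\<lambda>x. (2*m*x^2) * (1-x\<^sup>2) powr nu) has_integral 2*m*Mom nu 2) {-1..1}"
      using has_integral_mult_right[OF has_integral_mom[OF nu0, of 2], of "2*m"] by (simp add: mult.assoc)
    then have "(g1 m (xw nu) 0 has_integral 2*m*Mom nu 2) {-1..1}"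
      by (rule spike[of "\<lambda>x. 2*m*x^2"]) (simp add: g1_def AA0 wc_eq xw_def power2_eq_square algebra_simps)
    then show ?thesis unfolding E1_def by (rule integral_unique)
  qed
  have M2: "Mom nu 2 = Mom nu 0 / (2*nu+3)"
    using mom_even_step(1)[OF nu0, of 0] by (simp add: numeral_2_eq_2)
  have rr: "\<rho> \<in> {-1<..<1}" using r by auto
  have Eval: "E \<rho> = \<beta> * \<rho> * D \<rho>"
  proof -
    have EE: "E \<rho> = \<rho> * E1 0"
    proof (cases "\<rho> = 0")
      case True then show ?thesis using E0 by simp
    next
      case False
      then have "0 < \<rho>" using r by simp
      then show ?thesis using Ez[of \<rho>] E1c[of \<rho>] r by simp
    qed
    have "2*nu+3 = real n" using nu mdef by simp
    moreover have "2*m = real n - 2" using mdef by simp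
    ultimately show ?thesis unfolding EE E10 M2 Dc[OF r] D0 \<beta> by simp
  qed
  have hI: "((\<lambda>x. \<beta>*\<rho>*g0 m (wc nu) \<rho> x - g0 m (xw nu) \<rho> x) has_integral (\<beta>*\<rho>*D \<rho> - E \<rho>)) {-1..1}"
    unfolding D_def E_def
    by (intro has_integral_diff has_integral_mult_right int_g[OF cw rr] int_g[OF cx rr])
  have "((\<lambda>x. (\<beta> * \<rho> * 1 - x) * (1-x\<^sup>2) powr nu / (1+\<rho>\<^sup>2-2*\<rho>*x*1) powr m
      * hyp2F1 pa pb pc (4 * \<rho>\<^sup>2 * 0\<^sup>2 * (1-x\<^sup>2)/(1+\<rho>\<^sup>2-2*\<rho>*x*1)\<^sup>2)) has_integral (\<beta>*\<rho>*D \<rho> - E \<rho>)) {-1..1}"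
  proof (rule has_integral_spike_finite[where S="{-1,1}", OF _ _ hI])
    show "finite {-1,1::real}" by simp
  next
    fix x assume "x \<in> {-1..1::real} - {-1,1}"
    then have x: "x \<in> {-1<..<1}" by auto
    show "(\<beta> * \<rho> * 1 - x) * (1-x\<^sup>2) powr nu / (1+\<rho>\<^sup>2-2*\<rho>*x*1) powr m
      * hyp2F1 pa pb pc (4 * \<rho>\<^sup>2 * 0\<^sup>2 * (1-x\<^sup>2)/(1+\<rho>\<^sup>2-2*\<rho>*x*1)\<^sup>2) = \<beta>*\<rho>*g0 m (wc nu) \<rho> x - g0 m (xw nu) \<rho> x"
      unfolding g0_def xw_def wc_eq[OF x] AA_def
      by (simp add: hyp0 powr_minus_divide algebra_simps diff_divide_distrib)
  qed
  then show ?thesis using Eval by (simp add: integral_unique)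
qed



theorem lemma5:
  fixes n :: nat and \<rho> \<alpha> :: real
  assumes "n \<ge> 3" and "0 \<le> \<rho>" and "\<rho> < 1" and "0 \<le> \<alpha>" and "\<alpha> \<le> pi / 2"
  shows "((\<lambda>x. ((real n - 2) / real n * \<rho> * cos \<alpha> - x) * (1 - x\<^sup>2) powr ((real n - 3) / 2)
              / (1 + \<rho>\<^sup>2 - 2 * \<rho> * x * cos \<alpha>) powr (real n / 2 - 1)
              * hyp2F1 ((real n - 2) / 4) (real n / 4) ((real n - 1) / 2)
                  (4 * \<rho>\<^sup>2 * (sin \<alpha>)\<^sup>2 * (1 - x\<^sup>2) / (1 + \<rho>\<^sup>2 - 2 * \<rho> * x * cos \<alpha>)\<^sup>2))
          has_integral 0) {-1..1}"
proof -
  have rn: "real n \<ge> 3" using assms(1) by simp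
  have m: "real n / 2 - 1 \<ge> 1/2" using rn by simp
  have nu: "(real n - 3) / 2 = (real n / 2 - 1) - 1/2" by (simp add: field_simps)
  have pa: "(real n - 2) / 4 = (real n / 2 - 1) / 2" by (simp add: field_simps)
  have pb: "real n / 4 = ((real n / 2 - 1) + 1) / 2" by (simp add: field_simps)
  have pc: "(real n - 1) / 2 = (real n / 2 - 1) + 1/2" by (simp add: field_simps)
  have cs: "(cos \<alpha>)\<^sup>2 + (sin \<alpha>)\<^sup>2 = 1" by simp
  have cs1: "(1::real)\<^sup>2 + 0\<^sup>2 = 1" by simp
  note A = R3[OF m nu assms(2,3) cs pa pb pc, of "(real n - 2) / real n"]
  note B = R3[OF m nu assms(2,3) cs1 pa pb pc, of "(real n - 2) / real n"]
  have z: "integral {-1..1} (\<lambda>x. ((real n - 2) / real n * \<rho> * 1 - x) * (1 - x\<^sup>2) powr ((real n - 3) / 2)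
      / (1 + \<rho>\<^sup>2 - 2 * \<rho> * x * 1) powr (real n / 2 - 1)
      * hyp2F1 ((real n - 2) / 4) (real n / 4) ((real n - 1) / 2) (4 * \<rho>\<^sup>2 * 0\<^sup>2 * (1 - x\<^sup>2) / (1 + \<rho>\<^sup>2 - 2 * \<rho> * x * 1)\<^sup>2)) = 0"
    by (rule R4[OF assms(1) refl nu assms(2,3) refl])
  define S where "S = (\<lambda>N. \<Sum>j<N. aco (real n / 2 - 1) \<rho> j * ((real n - 2) / real n * \<rho> * Mom ((real n - 3) / 2) j - Mom ((real n - 3) / 2) (j+1)))"
  have "(\<lambda>N. 1 * S N) \<longlonglongrightarrow> 0" using B(2) unfolding z S_def .
  then have "S \<longlonglongrightarrow> 0" by simp
  then have "(\<lambda>N. cos \<alpha> * S N) \<longlonglongrightarrow> cos \<alpha> * 0" by (rule tendsto_mult_left)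
  then have "(\<lambda>N. cos \<alpha> * S N) \<longlonglongrightarrow> 0" by simp
  moreover have "(\<lambda>N. cos \<alpha> * S N) \<longlonglongrightarrow> integral {-1..1} (\<lambda>x. ((real n - 2) / real n * \<rho> * cos \<alpha> - x) * (1 - x\<^sup>2) powr ((real n - 3) / 2)
              / (1 + \<rho>\<^sup>2 - 2 * \<rho> * x * cos \<alpha>) powr (real n / 2 - 1)
              * hyp2F1 ((real n - 2) / 4) (real n / 4) ((real n - 1) / 2)
                  (4 * \<rho>\<^sup>2 * (sin \<alpha>)\<^sup>2 * (1 - x\<^sup>2) / (1 + \<rho>\<^sup>2 - 2 * \<rho> * x * cos \<alpha>)\<^sup>2))"
    using A(2) unfolding S_def .
  ultimately have I0: "integral {-1..1} (\<lambda>x. ((real n - 2) / real n * \<rho> * cos \<alpha> - x) * (1 - x\<^sup>2) powr ((real n - 3) / 2)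
              / (1 + \<rho>\<^sup>2 - 2 * \<rho> * x * cos \<alpha>) powr (real n / 2 - 1)
              * hyp2F1 ((real n - 2) / 4) (real n / 4) ((real n - 1) / 2)
                  (4 * \<rho>\<^sup>2 * (sin \<alpha>)\<^sup>2 * (1 - x\<^sup>2) / (1 + \<rho>\<^sup>2 - 2 * \<rho> * x * cos \<alpha>)\<^sup>2)) = 0"
    using LIMSEQ_unique by blast
  show ?thesis using integrable_integral[OF A(1)] unfolding I0 .
qed


end
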